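(* For all $n,m,N\in\mathbb{Z}$ the automorphisms $s_0,s_1,s_2,\pi,w_0,w_1,r$ act on the $\tau$ functions $\tau^{n,m}_N$ as follows: \[ s_0(\tau^{n,m}_{N})=\tau^{-n,m-n}_{N},\quad s_1(\tau^{n,m}_{N})=\tau^{m-1,n+1}_{N},\quad s_2(\tau^{n,m}_{N})=\tau^{n-m,-m}_{N},\quad \pi(\tau^{n,m}_{N})=\tau^{-m,n-m+1}_{N}, \] \[ w_0(\tau^{n,m}_{N})=\tau^{n,m}_{-N},\quad w_1(\tau^{n,m}_{N})=\tau^{n,m}_{2-N},\quad r(\tau^{n,m}_{N})=\tau^{n,m}_{1-N}. \]
   Context: Let $Q\in\mathbb{C}^\times$ be generic and let $\alpha_0,\alpha_1,\gamma$ be indeterminates; put $\alpha_2:=Q\alpha_0^{-1}\alpha_1^{-1}$, so $\alpha_0\alpha_1\alpha_2=Q$ (these are sixth roots of the usual parameters: $q=Q^6$, $a_i=\alpha_i^6$, $c=\gamma^6$). Let $\tau_i,\bar\tau_i$ ($i\in\mathbb{Z}/3\mathbb{Z}$) be six further indeterminates and $K=\mathbb{C}(\alpha_0,\alpha_1,\gamma,\tau_0,\tau_1,\tau_2,\bar\tau_0,\bar\tau_1,\bar\tau_2)$. Indices are taken mod 3. Define field automorphisms $s_0,s_1,s_2,\pi,w_0,w_1,r$ of $K$ (fixing $\mathbb{C}$) as follows. On parameters: $s_i(\alpha_i)=\alpha_i^{-1}$, $s_i(\alpha_j)=\alpha_j\alpha_i$ ($j\neq i$), $\pi(\alpha_j)=\alpha_{j+1}$,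 $s_i(\gamma)=\pi(\gamma)=\gamma$; $w_0,w_1,r$ fix every $\alpha_j$, and $w_0(\gamma)=\gamma^{-1}$, $w_1(\gamma)=Q^{-2}\gamma^{-1}$, $r(\gamma)=Q^{-1}\gamma^{-1}$. With $u_i=Q^{-2}\gamma^{-4}\alpha_i^6$ and $v_i=Q^{2}\gamma^{4}\alpha_i^6$: $s_i(\tau_i)=\dfrac{u_i\tau_{i+1}\bar\tau_{i-1}+\bar\tau_{i+1}\tau_{i-1}}{Q^{-1}\gamma^{-2}\alpha_i^{3}\,\bar\tau_i}$, $s_i(\bar\tau_i)=\dfrac{v_i\bar\tau_{i+1}\tau_{i-1}+\tau_{i+1}\bar\tau_{i-1}}{Q\gamma^{2}\alpha_i^{3}\,\tau_i}$, and $s_i$ fixes $\tau_j,\bar\tau_j$ for $j\ne i$; $\pi(\tau_i)=\tau_{i+1}$, $\pi(\bar\tau_i)=\bar\tau_{i+1}$; $w_0(\tau_i)=\tau_i$, $w_0(\bar\tau_i)=\dfrac{\alpha_{i+1}^2(\bar\tau_i\tau_{i+1}\tau_{i+2}+u_{i-1}\tau_i\bar\tau_{i+1}\tau_{i+2}+u_{i+1}^{-1}\tau_i\tau_{i+1}\bar\tau_{i+2})}{\alpha_{i+2}^2\,\bar\tau_{i+1}\bar\tau_{i+2}}$; $w_1(\bar\tau_i)=\bar\tau_i$, $w_1(\tau_i)=\dfrac{\alpha_{i+1}^2(\tau_i\bar\tau_{i+1}\bar\tau_{i+2}+v_{i-1}\bar\tau_i\tau_{i+1}\bar\tau_{i+2}+v_{i+1}^{-1}\bar\tau_i\bar\tau_{i+1}\tau_{i+2})}{\alpha_{i+2}^2\,\tau_{i+1}\tau_{i+2}}$;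 $r(\tau_i)=\bar\tau_i$, $r(\bar\tau_i)=\tau_i$. A product of generators denotes composition of automorphisms ($xy=x\circ y$). These generate a realization of the extended affine Weyl group of type $(A_2+A_1)^{(1)}$. Set $T_1=\pi s_2s_1$, $T_2=s_1\pi s_2$, $T_4=rw_0$ (these commute), and define $\tau^{n,m}_N=T_1^{\,n}T_2^{\,m}T_4^{\,N}(\tau_1)$ for $n,m,N\in\mathbb{Z}$. *)

theory Defs
  imports "HOL-Analysis.Analysis"
begin

text \<open>Model of the field K = C(Q, alpha0, alpha1, gamma, tau_i, taubar_i).
  The generic parameter Q is treated as one more indeterminate.  An element of K is
  represented by a function on points (assignments of complex values to the
  indeterminates); two elements are equal in K iff the representing functions agree
  on a nonempty open set of points.  A field automorphism fixing C and sending each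
  generator x to a rational expression e_x acts by pullback along the point map
  p |-> (x |-> e_x(p)).  Indices of tau, taubar, alpha are read mod 3.\<close>

datatype var = Qv | Al0 | Al1 | Ga | Tau int | Taub int

type_synonym point = "var \<Rightarrow> complex"
type_synonym kelt = "point \<Rightarrow> complex"
type_synonym aut = "kelt \<Rightarrow> kelt"

definition Qp :: "point \<Rightarrow> complex" where "Qp p = p Qv"
definition gam :: "point \<Rightarrow> complex" where "gam p = p Ga"

definition alph :: "point \<Rightarrow> int \<Rightarrow> complex" where
  "alph p i = (if i mod 3 = 0 then p Al0 else if i mod 3 = 1 then p Al1
               else Qp p / (p Al0 * p Al1))"

definition tau :: "point \<Rightarrow> int \<Rightarrow> complex" where "tau p i = p (Tau (i mod 3))"
definition taub :: "point \<Rightarrow> int \<Rightarrow> complex" where "taub p i = p (Taub (i mod 3))"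

definition uu :: "point \<Rightarrow> int \<Rightarrow> complex" where
  "uu p i = alph p i ^ 6 / (Qp p ^ 2 * gam p ^ 4)"
definition vv :: "point \<Rightarrow> int \<Rightarrow> complex" where
  "vv p i = Qp p ^ 2 * gam p ^ 4 * alph p i ^ 6"

definition sig_s :: "int \<Rightarrow> point \<Rightarrow> point" where
  "sig_s i p = (\<lambda>x. case x of
      Qv \<Rightarrow> Qp p
    | Al0 \<Rightarrow> (if i mod 3 = 0 then 1 / alph p 0 else alph p 0 * alph p i)
    | Al1 \<Rightarrow> (if i mod 3 = 1 then 1 / alph p 1 else alph p 1 * alph p i)
    | Ga \<Rightarrow> gam p
    | Tau j \<Rightarrow> (if j mod 3 = i mod 3 then
          (uu p i * tau p (i+1) * taub p (i-1) + taub p (i+1) * tau p (i-1))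
          / (alph p i ^ 3 * taub p i / (Qp p * gam p ^ 2))
        else tau p j)
    | Taub j \<Rightarrow> (if j mod 3 = i mod 3 then
          (vv p i * taub p (i+1) * tau p (i-1) + tau p (i+1) * taub p (i-1))
          / (Qp p * gam p ^ 2 * alph p i ^ 3 * tau p i)
        else taub p j))"

definition sig_pi :: "point \<Rightarrow> point" where
  "sig_pi p = (\<lambda>x. case x of
      Qv \<Rightarrow> Qp p | Al0 \<Rightarrow> alph p 1 | Al1 \<Rightarrow> alph p 2 | Ga \<Rightarrow> gam p
    | Tau j \<Rightarrow> tau p (j+1) | Taub j \<Rightarrow> taub p (j+1))"

definition sig_w0 :: "point \<Rightarrow> point" where
  "sig_w0 p = (\<lambda>x. case x of
      Qv \<Rightarrow> Qp p | Al0 \<Rightarrow> alph p 0 | Al1 \<Rightarrow> alph p 1 | Ga \<Rightarrow> 1 / gam p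
    | Tau j \<Rightarrow> tau p j
    | Taub i \<Rightarrow> alph p (i+1) ^ 2 *
        (taub p i * tau p (i+1) * tau p (i+2) + uu p (i-1) * tau p i * taub p (i+1) * tau p (i+2)
         + (1 / uu p (i+1)) * tau p i * tau p (i+1) * taub p (i+2))
        / (alph p (i+2) ^ 2 * taub p (i+1) * taub p (i+2)))"

definition sig_w1 :: "point \<Rightarrow> point" where
  "sig_w1 p = (\<lambda>x. case x of
      Qv \<Rightarrow> Qp p | Al0 \<Rightarrow> alph p 0 | Al1 \<Rightarrow> alph p 1 | Ga \<Rightarrow> 1 / (Qp p ^ 2 * gam p)
    | Taub j \<Rightarrow> taub p j
    | Tau i \<Rightarrow> alph p (i+1) ^ 2 *
        (tau p i * taub p (i+1) * taub p (i+2) + vv p (i-1) * taub p i * tau p (i+1) * taub p (i+2)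
         + (1 / vv p (i+1)) * taub p i * taub p (i+1) * tau p (i+2))
        / (alph p (i+2) ^ 2 * tau p (i+1) * tau p (i+2)))"

definition sig_r :: "point \<Rightarrow> point" where
  "sig_r p = (\<lambda>x. case x of
      Qv \<Rightarrow> Qp p | Al0 \<Rightarrow> alph p 0 | Al1 \<Rightarrow> alph p 1 | Ga \<Rightarrow> 1 / (Qp p * gam p)
    | Tau j \<Rightarrow> taub p j | Taub j \<Rightarrow> tau p j)"

definition pull :: "(point \<Rightarrow> point) \<Rightarrow> aut" where "pull \<sigma> f = f \<circ> \<sigma>"

definition s :: "int \<Rightarrow> aut" where "s i = pull (sig_s i)"
definition pi_a :: aut where "pi_a = pull sig_pi"
definition w0 :: aut where "w0 = pull sig_w0"
definition w1 :: aut where "w1 = pull sig_w1"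
definition r :: aut where "r = pull sig_r"

text \<open>Translations; products of generators are compositions.  The inverses are the
  reversed words (s_i, w_0, r are involutions and pi has order 3).\<close>

definition T1 :: aut where "T1 = pi_a \<circ> s 2 \<circ> s 1"
definition T1inv :: aut where "T1inv = s 1 \<circ> s 2 \<circ> pi_a \<circ> pi_a"
definition T2 :: aut where "T2 = s 1 \<circ> pi_a \<circ> s 2"
definition T2inv :: aut where "T2inv = s 2 \<circ> pi_a \<circ> pi_a \<circ> s 1"
definition T4 :: aut where "T4 = r \<circ> w0"
definition T4inv :: aut where "T4inv = w0 \<circ> r"

definition ipow :: "aut \<Rightarrow> aut \<Rightarrow> int \<Rightarrow> aut" where
  "ipow T Tinv k = (if 0 \<le> k then T ^^ nat k else Tinv ^^ nat (- k))"

definition tauf :: "int \<Rightarrow> int \<Rightarrow> int \<Rightarrow> kelt" where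
  "tauf n m N = ipow T1 T1inv n (ipow T2 T2inv m (ipow T4 T4inv N (\<lambda>p. tau p 1)))"

definition keq :: "kelt \<Rightarrow> kelt \<Rightarrow> bool" where
  "keq f g \<longleftrightarrow> (\<exists>U. open U \<and> U \<noteq> {} \<and> (\<forall>p\<in>U. f p = g p))"

end

theory Submission
  imports Defs
begin


definition CV :: "var set" where
  "CV = {Qv,Al0,Al1,Ga,Tau 0,Tau 1,Tau 2,Taub 0,Taub 1,Taub 2}"
definition NN :: "point set" where "NN = {p. \<forall>v\<in>CV. p v \<noteq> 0}"
definition mt :: "complex \<Rightarrow> complex \<Rightarrow> complex \<Rightarrow> complex \<Rightarrow> complex \<Rightarrow> complex \<Rightarrow> complex" where
  "mt x tp bm bp tm bi = (x*tp*bm + bp*tm/x)/bi"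

lemma tau_mod: "a mod 3 = b mod 3 \<Longrightarrow> tau p a = tau p b" by (simp add: tau_def)
lemma taub_mod: "a mod 3 = b mod 3 \<Longrightarrow> taub p a = taub p b" by (simp add: taub_def)
lemma alph_mod: "a mod 3 = b mod 3 \<Longrightarrow> alph p a = alph p b" by (simp add: alph_def)

lemma idx_simps [simp]:
  "tau p 3 = tau p 0" "tau p 4 = tau p 1" "tau p (-1) = tau p 2" "tau p (-2) = tau p 1"
  "taub p 3 = taub p 0" "taub p 4 = taub p 1" "taub p (-1) = taub p 2" "taub p (-2) = taub p 1"
  "alph p 3 = alph p 0" "alph p 4 = alph p 1" "alph p (-1) = alph p 2" "alph p (-2) = alph p 1"
  by (simp_all add: tau_def taub_def alph_def)

lemma NN_nz:
  assumes "p \<in> NN"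
  shows "tau p i \<noteq> 0" "taub p i \<noteq> 0" "alph p i \<noteq> 0" "Qp p \<noteq> 0" "gam p \<noteq> 0"
proof -
  have h: "\<And>v. v \<in> CV \<Longrightarrow> p v \<noteq> 0" using assms by (simp add: NN_def)
  have m: "i mod 3 = 0 \<or> i mod 3 = 1 \<or> i mod 3 = 2" by arith
  show "tau p i \<noteq> 0" using m h by (auto simp: tau_def CV_def)
  show "taub p i \<noteq> 0" using m h by (auto simp: taub_def CV_def)
  show "alph p i \<noteq> 0" using m h by (auto simp: alph_def CV_def Qp_def)
  show "Qp p \<noteq> 0" using h by (auto simp: Qp_def CV_def)
  show "gam p \<noteq> 0" using h by (auto simp: gam_def CV_def)
qed

lemma alph012: "p \<in> NN \<Longrightarrow> alph p 2 = Qp p / (alph p 0 * alph p 1)"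
  by (simp add: alph_def)

lemma s_Qp [simp]: "Qp (sig_s i p) = Qp p" by (simp add: sig_s_def Qp_def)
lemma s_gam [simp]: "gam (sig_s i p) = gam p" by (simp add: sig_s_def gam_def)
lemma s_alph: assumes "p \<in> NN"
  shows "alph (sig_s i p) j = (if j mod 3 = i mod 3 then 1 / alph p i else alph p j * alph p i)"
proof -
  have m: "i mod 3 = 0 \<or> i mod 3 = 1 \<or> i mod 3 = 2" "j mod 3 = 0 \<or> j mod 3 = 1 \<or> j mod 3 = 2" by arith+
  have nz: "p Al0 \<noteq> 0" "p Al1 \<noteq> 0" "p Qv \<noteq> 0" using assms by (auto simp: NN_def CV_def)
  show ?thesis using m nz
    by (auto simp: alph_def sig_s_def Qp_def field_simps)
qed
lemma alg_u: "(a::complex)^6/(Q^2*g^4) = (a^3/(Q*g^2))^2"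
  by (simp add: power_divide power_mult_distrib flip: power_mult)
lemma alg_v: "(Q::complex)^2*g^4*a^6 = (Q*g^2*a^3)^2"
  by (simp add: power_mult_distrib flip: power_mult)
lemma alg_mt1: "X \<noteq> 0 \<Longrightarrow> b \<noteq> 0 \<Longrightarrow> ((X::complex)^2*A + B)/(X*b) = mt X A' B' C' D' b \<longleftrightarrow> (X^2*A + B)/(X*b) = (X*A'*B' + C'*D'/X)/b"
  by (simp add: mt_def)
lemma s_tau: assumes "p \<in> NN"
  shows "tau (sig_s i p) j = (if j mod 3 = i mod 3 then
     mt (alph p i ^ 3 / (Qp p * gam p ^ 2)) (tau p (i+1)) (taub p (i-1)) (taub p (i+1)) (tau p (i-1)) (taub p i)
     else tau p j)"
proof (cases "j mod 3 = i mod 3")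
  case True
  have nz: "alph p i \<noteq> 0" "Qp p \<noteq> 0" "gam p \<noteq> 0" "taub p i \<noteq> 0" using NN_nz[OF assms] by auto
  define X where "X = alph p i ^ 3 / (Qp p * gam p ^ 2)"
  have X: "X \<noteq> 0" using nz by (simp_all add: X_def)
  have u: "uu p i = X^2" by (simp add: uu_def X_def alg_u Qp_def gam_def)
  have "tau (sig_s i p) j = (uu p i * tau p (i+1) * taub p (i-1) + taub p (i+1) * tau p (i-1)) / (X * taub p i)"
    using True by (simp add: tau_def[of "sig_s i p"] sig_s_def X_def tau_def taub_def Qp_def gam_def)
  also have "... = mt X (tau p (i+1)) (taub p (i-1)) (taub p (i+1)) (tau p (i-1)) (taub p i)"
    unfolding u mt_def using X nz by (simp add: field_simps power2_eq_square)
  finally show ?thesis using True by (simp add: X_def)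
next
  case False
  then show ?thesis by (simp add: tau_def sig_s_def)
qed

lemma s_taub: assumes "p \<in> NN"
  shows "taub (sig_s i p) j = (if j mod 3 = i mod 3 then
     mt (Qp p * gam p ^ 2 * alph p i ^ 3) (taub p (i+1)) (tau p (i-1)) (tau p (i+1)) (taub p (i-1)) (tau p i)
     else taub p j)"
proof (cases "j mod 3 = i mod 3")
  case True
  have nz: "alph p i \<noteq> 0" "Qp p \<noteq> 0" "gam p \<noteq> 0" "tau p i \<noteq> 0" using NN_nz[OF assms] by auto
  define Y where "Y = Qp p * gam p ^ 2 * alph p i ^ 3"
  have Y: "Y \<noteq> 0" using nz by (simp_all add: Y_def)
  have v: "vv p i = Y^2" by (simp add: vv_def Y_def alg_v Qp_def gam_def)
  have "taub (sig_s i p) j = (vv p i * taub p (i+1) * tau p (i-1) + tau p (i+1) * taub p (i-1)) / (Y * tau p i)"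
    using True by (simp add: taub_def[of "sig_s i p"] sig_s_def Y_def tau_def taub_def)
  also have "... = mt Y (taub p (i+1)) (tau p (i-1)) (tau p (i+1)) (taub p (i-1)) (tau p i)"
    unfolding v mt_def using Y nz by (simp add: field_simps power2_eq_square)
  finally show ?thesis using True by (simp add: Y_def)
next
  case False
  then show ?thesis by (simp add: taub_def sig_s_def)
qed
lemma modk: "((j::int) mod 3 + k) mod 3 = (j + k) mod 3" "((j::int) mod 3 - k) mod 3 = (j - k) mod 3"
  by (simp_all add: mod_add_left_eq mod_diff_left_eq)

lemma pi_Qp [simp]: "Qp (sig_pi p) = Qp p" by (simp add: sig_pi_def Qp_def)
lemma pi_gam [simp]: "gam (sig_pi p) = gam p" by (simp add: sig_pi_def gam_def)
lemma pi_tau [simp]: "tau (sig_pi p) j = tau p (j+1)" by (simp add: sig_pi_def tau_def modk)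
lemma pi_taub [simp]: "taub (sig_pi p) j = taub p (j+1)" by (simp add: sig_pi_def taub_def modk)
lemma pi_alph: assumes "p \<in> NN" shows "alph (sig_pi p) j = alph p (j+1)"
proof -
  have m: "j mod 3 = 0 \<or> j mod 3 = 1 \<or> j mod 3 = 2" by arith
  have nz: "p Al0 \<noteq> 0" "p Al1 \<noteq> 0" "p Qv \<noteq> 0" using assms by (auto simp: NN_def CV_def)
  have e: "(j+1) mod 3 = (j mod 3 + 1) mod 3" by (simp add: modk)
  show ?thesis using m nz unfolding alph_def[of _ "j+1"] e
    by (auto simp: alph_def sig_pi_def Qp_def field_simps)
qed

lemma w0_Qp [simp]: "Qp (sig_w0 p) = Qp p" by (simp add: sig_w0_def Qp_def)
lemma w0_gam [simp]: "gam (sig_w0 p) = 1 / gam p" by (simp add: sig_w0_def gam_def)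
lemma w0_tau [simp]: "tau (sig_w0 p) j = tau p j" by (simp add: sig_w0_def tau_def)
lemma w0_alph [simp]: "alph (sig_w0 p) j = alph p j" by (simp add: sig_w0_def alph_def Qp_def)
lemma w0_taub: "taub (sig_w0 p) i = alph p (i+1) ^ 2 *
        (taub p i * tau p (i+1) * tau p (i+2) + uu p (i-1) * tau p i * taub p (i+1) * tau p (i+2)
         + (1 / uu p (i+1)) * tau p i * tau p (i+1) * taub p (i+2))
        / (alph p (i+2) ^ 2 * taub p (i+1) * taub p (i+2))"
proof -
  have a: "\<And>k. alph p (i mod 3 + k) = alph p (i + k)" "\<And>k. alph p (i mod 3 - k) = alph p (i - k)"
    by (rule alph_mod, simp add: modk)+
  have t: "\<And>k. tau p (i mod 3 + k) = tau p (i + k)" "\<And>k. taub p (i mod 3 + k) = taub p (i + k)"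
    "\<And>k. tau p (i mod 3) = tau p i" "\<And>k. taub p (i mod 3) = taub p i"
    by (rule tau_mod taub_mod, simp add: modk)+
  have u: "\<And>k. uu p (i mod 3 + k) = uu p (i + k)" "\<And>k. uu p (i mod 3 - k) = uu p (i - k)"
    unfolding uu_def using a by simp_all
  show ?thesis unfolding taub_def[of "sig_w0 p"] by (simp add: sig_w0_def a t u)
qed

lemma w1_Qp [simp]: "Qp (sig_w1 p) = Qp p" by (simp add: sig_w1_def Qp_def)
lemma w1_gam [simp]: "gam (sig_w1 p) = 1 / (Qp p ^ 2 * gam p)" by (simp add: sig_w1_def gam_def Qp_def)
lemma w1_taub [simp]: "taub (sig_w1 p) j = taub p j" by (simp add: sig_w1_def taub_def)
lemma w1_alph [simp]: "alph (sig_w1 p) j = alph p j" by (simp add: sig_w1_def alph_def Qp_def)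
lemma w1_tau: "tau (sig_w1 p) i = alph p (i+1) ^ 2 *
        (tau p i * taub p (i+1) * taub p (i+2) + vv p (i-1) * taub p i * tau p (i+1) * taub p (i+2)
         + (1 / vv p (i+1)) * taub p i * taub p (i+1) * tau p (i+2))
        / (alph p (i+2) ^ 2 * tau p (i+1) * tau p (i+2))"
proof -
  have a: "\<And>k. alph p (i mod 3 + k) = alph p (i + k)" "\<And>k. alph p (i mod 3 - k) = alph p (i - k)"
    by (rule alph_mod, simp add: modk)+
  have t: "\<And>k. tau p (i mod 3 + k) = tau p (i + k)" "\<And>k. taub p (i mod 3 + k) = taub p (i + k)"
    "\<And>k. tau p (i mod 3) = tau p i" "\<And>k. taub p (i mod 3) = taub p i"
    by (rule tau_mod taub_mod, simp add: modk)+
  have u: "\<And>k. vv p (i mod 3 + k) = vv p (i + k)" "\<And>k. vv p (i mod 3 - k) = vv p (i - k)"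
    unfolding vv_def using a by simp_all
  show ?thesis unfolding tau_def[of "sig_w1 p"] by (simp add: sig_w1_def a t u)
qed

lemma r_Qp [simp]: "Qp (sig_r p) = Qp p" by (simp add: sig_r_def Qp_def)
lemma r_gam [simp]: "gam (sig_r p) = 1 / (Qp p * gam p)" by (simp add: sig_r_def gam_def Qp_def)
lemma r_tau [simp]: "tau (sig_r p) j = taub p j" by (simp add: sig_r_def tau_def taub_def)
lemma r_taub [simp]: "taub (sig_r p) j = tau p j" by (simp add: sig_r_def tau_def taub_def)
lemma r_alph [simp]: "alph (sig_r p) j = alph p j" by (simp add: sig_r_def alph_def Qp_def)

definition agc :: "point \<Rightarrow> point \<Rightarrow> bool" where "agc p q \<longleftrightarrow> (\<forall>v\<in>CV. p v = q v)"
lemma agcI: "Qp p = Qp q \<Longrightarrow> gam p = gam q \<Longrightarrow> alph p 0 = alph q 0 \<Longrightarrow> alph p 1 = alph q 1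
  \<Longrightarrow> tau p 0 = tau q 0 \<Longrightarrow> tau p 1 = tau q 1 \<Longrightarrow> tau p 2 = tau q 2
  \<Longrightarrow> taub p 0 = taub q 0 \<Longrightarrow> taub p 1 = taub q 1 \<Longrightarrow> taub p 2 = taub q 2 \<Longrightarrow> agc p q"
  by (simp add: agc_def CV_def Qp_def gam_def alph_def tau_def taub_def)
definition aa :: "point \<Rightarrow> int \<Rightarrow> complex" where "aa p j = alph p j ^ 3"
definition cc :: "point \<Rightarrow> complex" where "cc p = Qp p * gam p ^ 2"
lemma aa_idx [simp]: "aa p 3 = aa p 0" "aa p 4 = aa p 1" "aa p (-1) = aa p 2" "aa p (-2) = aa p 1"
  by (simp_all add: aa_def)
lemma NN_nz2: "p \<in> NN \<Longrightarrow> aa p i \<noteq> 0" "p \<in> NN \<Longrightarrow> cc p \<noteq> 0"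
  by (simp_all add: aa_def cc_def NN_nz)
lemma s_tau': "p \<in> NN \<Longrightarrow> tau (sig_s i p) j = (if j mod 3 = i mod 3 then
     mt (aa p i / cc p) (tau p (i+1)) (taub p (i-1)) (taub p (i+1)) (tau p (i-1)) (taub p i)
     else tau p j)" by (simp add: s_tau aa_def cc_def)
lemma s_taub': "p \<in> NN \<Longrightarrow> taub (sig_s i p) j = (if j mod 3 = i mod 3 then
     mt (cc p * aa p i) (taub p (i+1)) (tau p (i-1)) (tau p (i+1)) (taub p (i-1)) (tau p i)
     else taub p j)" by (simp add: s_taub aa_def cc_def)
lemma s_aa: "p \<in> NN \<Longrightarrow> aa (sig_s i p) j = (if j mod 3 = i mod 3 then 1 / aa p i else aa p j * aa p i)"
  by (simp add: aa_def s_alph power_mult_distrib power_one_over)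
lemma s_cc [simp]: "cc (sig_s i p) = cc p" by (simp add: cc_def)
lemma pi_aa: "p \<in> NN \<Longrightarrow> aa (sig_pi p) j = aa p (j+1)" by (simp add: aa_def pi_alph)
lemma pi_cc [simp]: "cc (sig_pi p) = cc p" by (simp add: cc_def)
lemma s_tau2: "p \<in> NN \<Longrightarrow> tau (sig_s i p) j = (if j mod 3 = i mod 3 then
     mt (alph p i ^ 3 / cc p) (tau p (i+1)) (taub p (i-1)) (taub p (i+1)) (tau p (i-1)) (taub p i)
     else tau p j)" by (simp add: s_tau cc_def)
lemma s_taub2: "p \<in> NN \<Longrightarrow> taub (sig_s i p) j = (if j mod 3 = i mod 3 then
     mt (cc p * alph p i ^ 3) (taub p (i+1)) (tau p (i-1)) (tau p (i+1)) (taub p (i-1)) (tau p i)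
     else taub p j)" by (simp add: s_taub cc_def)
lemma w0_cc: "p \<in> NN \<Longrightarrow> cc (sig_w0 p) = Qp p ^ 2 / cc p"
  by (simp add: cc_def NN_nz power2_eq_square field_simps)
lemma w0_taub2: "taub (sig_w0 p) i = alph p (i+1) ^ 2 *
        (taub p i * tau p (i+1) * tau p (i+2) + alph p (i-1) ^ 6 / cc p ^ 2 * tau p i * taub p (i+1) * tau p (i+2)
         + cc p ^ 2 / alph p (i+1) ^ 6 * tau p i * tau p (i+1) * taub p (i+2))
        / (alph p (i+2) ^ 2 * taub p (i+1) * taub p (i+2))"
  by (simp add: w0_taub uu_def cc_def power_mult_distrib flip: power_mult)
lemma w0_NN: "p \<in> NN \<Longrightarrow> sig_w0 p \<in> NN \<Longrightarrow> True" by simp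


definition posr :: "complex \<Rightarrow> bool" where "posr z \<longleftrightarrow> Im z = 0 \<and> 0 < Re z"
definition PP :: "point set" where "PP = {p. \<forall>v\<in>CV. posr (p v)}"

lemma posr_add: "posr a \<Longrightarrow> posr b \<Longrightarrow> posr (a + b)" by (simp add: posr_def)
lemma posr_mult: "posr a \<Longrightarrow> posr b \<Longrightarrow> posr (a * b)" by (simp add: posr_def)
lemma posr_inv: "posr a \<Longrightarrow> posr (inverse a)"
  by (simp add: posr_def inverse_complex.sel complex_neq_0 power2_eq_square)
lemma posr_div: "posr a \<Longrightarrow> posr b \<Longrightarrow> posr (a / b)"
  by (simp add: divide_inverse posr_mult posr_inv)
lemma posr_pow: "posr a \<Longrightarrow> posr (a ^ n)"
  by (induction n) (auto simp: posr_mult posr_def)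
lemma posr_1: "posr 1" by (simp add: posr_def)
lemmas posr_intros = posr_add posr_mult posr_div posr_pow posr_1

lemma PP_coords: assumes "p \<in> PP"
  shows "posr (tau p k)" "posr (taub p k)" "posr (alph p k)" "posr (Qp p)" "posr (gam p)"
proof -
  have h: "\<And>v. v \<in> CV \<Longrightarrow> posr (p v)" using assms by (simp add: PP_def)
  have m: "k mod 3 = 0 \<or> k mod 3 = 1 \<or> k mod 3 = 2" by arith
  show "posr (tau p k)" using m h by (auto simp: tau_def CV_def)
  show "posr (taub p k)" using m h by (auto simp: taub_def CV_def)
  show "posr (alph p k)" using m h by (auto simp: alph_def CV_def Qp_def intro!: posr_intros)
  show "posr (Qp p)" using h by (auto simp: Qp_def CV_def)
  show "posr (gam p)" using h by (auto simp: gam_def CV_def)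
qed
lemma PP_uu: "p \<in> PP \<Longrightarrow> posr (uu p k)" "p \<in> PP \<Longrightarrow> posr (vv p k)"
  by (auto simp: uu_def vv_def PP_coords intro!: posr_intros)

lemma PP_NN: "PP \<subseteq> NN"
  by (auto simp: PP_def NN_def posr_def)
lemma PP_ne: "(\<lambda>_. 1) \<in> PP" by (simp add: PP_def posr_def)

lemma PP_I: "(\<And>v. v \<in> CV \<Longrightarrow> posr (q v)) \<Longrightarrow> q \<in> PP" by (simp add: PP_def)

lemmas PPc = PP_coords PP_uu

lemma s_PP: "p \<in> PP \<Longrightarrow> sig_s i p \<in> PP"
  by (rule PP_I) (auto simp: CV_def sig_s_def PPc intro!: posr_intros)
lemma pi_PP: "p \<in> PP \<Longrightarrow> sig_pi p \<in> PP"
  by (rule PP_I) (auto simp: CV_def sig_pi_def PPc intro!: posr_intros)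
lemma w0_PP: "p \<in> PP \<Longrightarrow> sig_w0 p \<in> PP"
  by (rule PP_I) (auto simp: CV_def sig_w0_def PPc intro!: posr_intros)
lemma w1_PP: "p \<in> PP \<Longrightarrow> sig_w1 p \<in> PP"
  by (rule PP_I) (auto simp: CV_def sig_w1_def PPc intro!: posr_intros)
lemma r_PP: "p \<in> PP \<Longrightarrow> sig_r p \<in> PP"
  by (rule PP_I) (auto simp: CV_def sig_r_def PPc intro!: posr_intros)

lemma open_NN: "open NN"
proof -
  have "NN = {f. \<forall>i\<in>CV. f (id i) \<in> (\<lambda>_. -{0}) i}" by (auto simp: NN_def)
  also have "open ..." by (rule product_topology_basis') (auto simp: CV_def)
  finally show ?thesis .
qed

lemma cont_proj: "continuous_on S (\<lambda>p::point. p v)"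
  by (rule continuous_on_subset[OF continuous_on_product_coordinates]) simp
lemma cont_tau: "continuous_on S (\<lambda>p. tau p k)" unfolding tau_def by (rule cont_proj)
lemma cont_taub: "continuous_on S (\<lambda>p. taub p k)" unfolding taub_def by (rule cont_proj)
lemma cont_Qp: "continuous_on S (\<lambda>p. Qp p)" unfolding Qp_def by (rule cont_proj)
lemma cont_gam: "continuous_on S (\<lambda>p. gam p)" unfolding gam_def by (rule cont_proj)
lemma cont_alph: "continuous_on NN (\<lambda>p. alph p k)"
proof -
  have e: "(\<lambda>p. alph p k) = (if k mod 3 = 0 then (\<lambda>p. p Al0) else if k mod 3 = 1 then (\<lambda>p. p Al1)
     else (\<lambda>p. p Qv / (p Al0 * p Al1)))" by (auto simp: alph_def Qp_def)
  have nz: "\<And>p. p \<in> NN \<Longrightarrow> p Al0 * p Al1 \<noteq> 0" by (simp add: NN_def CV_def)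
  have c: "continuous_on NN (\<lambda>p. p Qv / (p Al0 * p Al1))"
    by (rule continuous_on_divide) (auto intro: continuous_on_mult cont_proj simp: NN_def CV_def)
  show ?thesis unfolding e using c by (simp add: cont_proj)
qed
lemma cont_uu: "continuous_on NN (\<lambda>p. uu p k)"
  unfolding uu_def by (intro continuous_intros cont_alph cont_Qp cont_gam) (simp add: NN_nz)
lemma cont_vv: "continuous_on NN (\<lambda>p. vv p k)"
  unfolding vv_def by (intro continuous_intros cont_alph cont_Qp cont_gam)

lemmas contI = cont_tau cont_taub cont_Qp cont_gam cont_alph cont_uu cont_vv

lemma NN_nz3: "p \<in> NN \<Longrightarrow> uu p k \<noteq> 0" "p \<in> NN \<Longrightarrow> vv p k \<noteq> 0"
  by (simp_all add: uu_def vv_def NN_nz)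

lemma cont_s: "continuous_on NN (sig_s i)"
proof (rule continuous_on_coordinatewise_then_product)
  fix v show "continuous_on NN (\<lambda>p. sig_s i p v)"
  proof (cases v)
    case (Tau j) show ?thesis
      by (cases "j mod 3 = i mod 3") (auto simp: Tau sig_s_def NN_nz intro!: continuous_intros contI)
  next
    case (Taub j) show ?thesis
      by (cases "j mod 3 = i mod 3") (auto simp: Taub sig_s_def NN_nz intro!: continuous_intros contI)
  next
    case Al0 show ?thesis
      by (cases "i mod 3 = 0") (auto simp: Al0 sig_s_def NN_nz intro!: continuous_intros contI)
  next
    case Al1 show ?thesis
      by (cases "i mod 3 = 1") (auto simp: Al1 sig_s_def NN_nz intro!: continuous_intros contI)
  qed (auto simp: sig_s_def intro!: continuous_intros contI)
qed
lemma cont_pi: "continuous_on NN sig_pi"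
proof (rule continuous_on_coordinatewise_then_product)
  fix v show "continuous_on NN (\<lambda>p. sig_pi p v)"
    by (cases v) (auto simp: sig_pi_def intro!: continuous_intros contI)
qed
lemma cont_w0: "continuous_on NN sig_w0"
proof (rule continuous_on_coordinatewise_then_product)
  fix v show "continuous_on NN (\<lambda>p. sig_w0 p v)"
    by (cases v) (auto simp: sig_w0_def NN_nz NN_nz3 intro!: continuous_intros contI)
qed
lemma cont_w1: "continuous_on NN sig_w1"
proof (rule continuous_on_coordinatewise_then_product)
  fix v show "continuous_on NN (\<lambda>p. sig_w1 p v)"
    by (cases v) (auto simp: sig_w1_def NN_nz NN_nz3 intro!: continuous_intros contI)
qed
lemma cont_r: "continuous_on NN sig_r"
proof (rule continuous_on_coordinatewise_then_product)
  fix v show "continuous_on NN (\<lambda>p. sig_r p v)"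
    by (cases v) (auto simp: sig_r_def NN_nz intro!: continuous_intros contI)
qed

lemma agc_fun: assumes "agc p q"
  shows "tau p = tau q" "taub p = taub q" "alph p = alph q" "Qp p = Qp q" "gam p = gam q" "uu p = uu q" "vv p = vv q"
proof -
  have h: "\<And>v. v \<in> CV \<Longrightarrow> p v = q v" using assms by (simp add: agc_def)
  have m: "\<And>k::int. k mod 3 = 0 \<or> k mod 3 = 1 \<or> k mod 3 = 2" by arith
  show t: "tau p = tau q" by (rule ext) (use m h in \<open>auto simp: tau_def CV_def\<close>)
  show tb: "taub p = taub q" by (rule ext) (use m h in \<open>auto simp: taub_def CV_def\<close>)
  show q: "Qp p = Qp q" using h by (simp add: Qp_def CV_def)
  show g: "gam p = gam q" using h by (simp add: gam_def CV_def)
  show a: "alph p = alph q" by (rule ext) (use m h in \<open>auto simp: alph_def Qp_def CV_def\<close>)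
  show "uu p = uu q" "vv p = vv q" by (rule ext, simp add: uu_def vv_def a q g)+
qed

lemma agc_fun2: "agc p q \<Longrightarrow> tau p k = tau q k" "agc p q \<Longrightarrow> taub p k = taub q k" "agc p q \<Longrightarrow> alph p k = alph q k"
  "agc p q \<Longrightarrow> uu p k = uu q k" "agc p q \<Longrightarrow> vv p k = vv q k"
  by (simp_all add: agc_fun)
lemma agc_s: assumes "agc p q" shows "sig_s i p = sig_s i q"
  by (rule ext) (simp add: sig_s_def agc_fun2[OF assms] agc_fun(4,5)[OF assms] split: var.split)
lemma agc_pi: assumes "agc p q" shows "sig_pi p = sig_pi q"
  by (rule ext) (simp add: sig_pi_def agc_fun2[OF assms] agc_fun(4,5)[OF assms] split: var.split)
lemma agc_w0: assumes "agc p q" shows "sig_w0 p = sig_w0 q"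
  by (rule ext) (simp add: sig_w0_def agc_fun2[OF assms] agc_fun(4,5)[OF assms] split: var.split)
lemma agc_w1: assumes "agc p q" shows "sig_w1 p = sig_w1 q"
  by (rule ext) (simp add: sig_w1_def agc_fun2[OF assms] agc_fun(4,5)[OF assms] split: var.split)
lemma agc_r: assumes "agc p q" shows "sig_r p = sig_r q"
  by (rule ext) (simp add: sig_r_def agc_fun2[OF assms] agc_fun(4,5)[OF assms] split: var.split)

lemma r_cc: "p \<in> NN \<Longrightarrow> cc (sig_r p) = 1 / cc p"
  by (simp add: cc_def NN_nz power2_eq_square field_simps)
lemma w1_cc: "p \<in> NN \<Longrightarrow> cc (sig_w1 p) = 1 / (Qp p ^ 2 * cc p)"
  by (simp add: cc_def NN_nz power2_eq_square field_simps)
lemma w1_tau2: "tau (sig_w1 p) i = alph p (i+1) ^ 2 *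
        (tau p i * taub p (i+1) * taub p (i+2) + cc p ^ 2 * alph p (i-1) ^ 6 * taub p i * tau p (i+1) * taub p (i+2)
         + 1 / (cc p ^ 2 * alph p (i+1) ^ 6) * taub p i * taub p (i+1) * tau p (i+2))
        / (alph p (i+2) ^ 2 * tau p (i+1) * tau p (i+2))"
  by (simp add: w1_tau vv_def cc_def power_mult_distrib flip: power_mult)


definition core :: "kelt \<Rightarrow> bool" where "core f \<longleftrightarrow> (\<forall>p q. agc p q \<longrightarrow> f p = f q)"
definition geq :: "kelt \<Rightarrow> kelt \<Rightarrow> bool" where
  "geq f g \<longleftrightarrow> core f \<and> core g \<and> (\<exists>U. open U \<and> PP \<subseteq> U \<and> (\<forall>p\<in>U. f p = g p))"
definition aeq :: "aut \<Rightarrow> aut \<Rightarrow> bool" where "aeq A B \<longleftrightarrow> (\<forall>f g. geq f g \<longrightarrow> geq (A f) (B g))"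
definition gmap :: "(point \<Rightarrow> point) \<Rightarrow> bool" where
  "gmap \<sigma> \<longleftrightarrow> (\<exists>Ov. open Ov \<and> PP \<subseteq> Ov \<and> continuous_on Ov \<sigma>) \<and> (\<forall>p\<in>PP. \<sigma> p \<in> PP) \<and> (\<forall>p q. agc p q \<longrightarrow> agc (\<sigma> p) (\<sigma> q))"

lemma geq_sym: "geq f g \<Longrightarrow> geq g f" unfolding geq_def by metis
lemma geq_trans: assumes "geq f g" "geq g h" shows "geq f h"
proof -
  obtain U where U: "open U" "PP \<subseteq> U" "\<forall>p\<in>U. f p = g p" using assms(1) by (auto simp: geq_def)
  obtain V where V: "open V" "PP \<subseteq> V" "\<forall>p\<in>V. g p = h p" using assms(2) by (auto simp: geq_def)
  have "open (U \<inter> V)" "PP \<subseteq> U \<inter> V" "\<forall>p\<in>U \<inter> V. f p = h p" using U V by auto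
  then show ?thesis using assms by (auto simp: geq_def)
qed
lemma geq_refl: "core f \<Longrightarrow> geq f f" unfolding geq_def by (rule conjI, simp, rule conjI, simp, rule exI[of _ UNIV]) auto
lemma geq_core: "geq f g \<Longrightarrow> core f" "geq f g \<Longrightarrow> core g" by (simp_all add: geq_def)
lemma geq_keq: "geq f g \<Longrightarrow> keq f g"
  unfolding geq_def keq_def using PP_ne by blast

lemma aeq_sym: "aeq A B \<Longrightarrow> aeq B A" unfolding aeq_def by (meson geq_sym)
lemma aeq_trans: assumes "aeq A B" "aeq B C" shows "aeq A C"
  unfolding aeq_def
proof (intro allI impI)
  fix f g assume h: "geq f g"
  then have "geq (A f) (B g)" using assms(1) by (simp add: aeq_def)
  moreover have "geq (B g) (C g)" using assms(2) geq_refl[OF geq_core(2)[OF h]] by (simp add: aeq_def)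
  ultimately show "geq (A f) (C g)" by (rule geq_trans)
qed
lemma aeq_comp: "aeq A A' \<Longrightarrow> aeq B B' \<Longrightarrow> aeq (A \<circ> B) (A' \<circ> B')"
  unfolding aeq_def by simp
lemma aeq_id: "aeq id id" by (simp add: aeq_def)
lemma aeq_refl1: "aeq A B \<Longrightarrow> aeq A A" by (meson aeq_sym aeq_trans)
lemma aeq_refl2: "aeq A B \<Longrightarrow> aeq B B" by (meson aeq_sym aeq_trans)

lemma pull_comp: "pull \<sigma> \<circ> pull \<rho> = pull (\<rho> \<circ> \<sigma>)" by (rule ext) (simp add: pull_def o_assoc)
lemma pull_id: "pull id = id" by (rule ext) (simp add: pull_def)

lemma gmap_id: "gmap id"
  unfolding gmap_def by (auto intro!: exI[of _ UNIV] continuous_on_id)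

lemma gmap_comp: assumes "gmap \<sigma>" "gmap \<rho>" shows "gmap (\<rho> \<circ> \<sigma>)"
proof -
  obtain O1 where O1: "open O1" "PP \<subseteq> O1" "continuous_on O1 \<sigma>" using assms(1) by (auto simp: gmap_def)
  obtain O2 where O2: "open O2" "PP \<subseteq> O2" "continuous_on O2 \<rho>" using assms(2) by (auto simp: gmap_def)
  have P1: "\<forall>p\<in>PP. \<sigma> p \<in> PP" "\<forall>p q. agc p q \<longrightarrow> agc (\<sigma> p) (\<sigma> q)" using assms(1) by (auto simp: gmap_def)
  have P2: "\<forall>p\<in>PP. \<rho> p \<in> PP" "\<forall>p q. agc p q \<longrightarrow> agc (\<rho> p) (\<rho> q)" using assms(2) by (auto simp: gmap_def)
  have "open (O1 \<inter> \<sigma> -` O2)" by (rule continuous_open_preimage[OF O1(3) O1(1) O2(1)])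
  moreover have "PP \<subseteq> O1 \<inter> \<sigma> -` O2" using O1 O2 P1 by auto
  moreover have "continuous_on (O1 \<inter> \<sigma> -` O2) (\<rho> \<circ> \<sigma>)"
    by (rule continuous_on_compose) (auto intro: continuous_on_subset[OF O1(3)] continuous_on_subset[OF O2(3)])
  ultimately show ?thesis using P1 P2 unfolding gmap_def by (metis comp_apply)
qed

lemma aeq_pull:
  assumes "gmap \<sigma>" "gmap \<rho>" "open V" "PP \<subseteq> V" "\<And>p. p \<in> V \<Longrightarrow> agc (\<sigma> p) (\<rho> p)"
  shows "aeq (pull \<sigma>) (pull \<rho>)"
  unfolding aeq_def
proof (intro allI impI)
  fix f g assume h: "geq f g"
  obtain U where U: "open U" "PP \<subseteq> U" "\<forall>p\<in>U. f p = g p" using h by (auto simp: geq_def)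
  obtain O2 where O2: "open O2" "PP \<subseteq> O2" "continuous_on O2 \<rho>" using assms(2) by (auto simp: gmap_def)
  have P1: "\<forall>p q. agc p q \<longrightarrow> agc (\<sigma> p) (\<sigma> q)" using assms(1) by (auto simp: gmap_def)
  have P2: "\<forall>p\<in>PP. \<rho> p \<in> PP" "\<forall>p q. agc p q \<longrightarrow> agc (\<rho> p) (\<rho> q)" using assms(2) by (auto simp: gmap_def)
  have cf: "core f" "core g" using h by (auto simp: geq_def)
  have W: "open (V \<inter> (O2 \<inter> \<rho> -` U))" using continuous_open_preimage[OF O2(3) O2(1) U(1)] assms(3) by auto
  have WP: "PP \<subseteq> V \<inter> (O2 \<inter> \<rho> -` U)" using assms(4) O2(2) P2(1) U(2) by auto
  have eq: "\<forall>p\<in>V \<inter> (O2 \<inter> \<rho> -` U). pull \<sigma> f p = pull \<rho> g p"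
  proof
    fix p assume p: "p \<in> V \<inter> (O2 \<inter> \<rho> -` U)"
    have "f (\<sigma> p) = f (\<rho> p)" using cf(1) assms(5) p by (auto simp: core_def)
    also have "... = g (\<rho> p)" using U(3) p by auto
    finally show "pull \<sigma> f p = pull \<rho> g p" by (simp add: pull_def)
  qed
  have c1: "core (pull \<sigma> f)" using P1 cf(1) by (auto simp: core_def pull_def)
  have c2: "core (pull \<rho> g)" using P2 cf(2) by (auto simp: core_def pull_def)
  show "geq (pull \<sigma> f) (pull \<rho> g)" unfolding geq_def using c1 c2 W WP eq by blast
qed

lemma agc_refl: "agc p p" by (simp add: agc_def)
lemma gmap_gen: "continuous_on NN \<sigma> \<Longrightarrow> (\<And>p. p \<in> PP \<Longrightarrow> \<sigma> p \<in> PP) \<Longrightarrow> (\<And>p q. agc p q \<Longrightarrow> \<sigma> p = \<sigma> q) \<Longrightarrow> gmap \<sigma>"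
  unfolding gmap_def using open_NN PP_NN agc_refl by metis

datatype gen = S0 | S1 | S2 | Pi | W0 | W1 | R

fun sg :: "gen \<Rightarrow> point \<Rightarrow> point" where
  "sg S0 = sig_s 0" | "sg S1 = sig_s 1" | "sg S2 = sig_s 2" | "sg Pi = sig_pi"
| "sg W0 = sig_w0" | "sg W1 = sig_w1" | "sg R = sig_r"

lemma sg_cont: "continuous_on NN (sg g)"
  by (cases g) (simp_all add: cont_s cont_pi cont_w0 cont_w1 cont_r)
lemma sg_PP: "p \<in> PP \<Longrightarrow> sg g p \<in> PP"
  by (cases g) (simp_all add: s_PP pi_PP w0_PP w1_PP r_PP)
lemma sg_agc: "agc p q \<Longrightarrow> sg g p = sg g q"
  by (cases g) (simp_all add: agc_s agc_pi agc_w0 agc_w1 agc_r)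
lemma gmap_sg: "gmap (sg g)" by (rule gmap_gen[OF sg_cont sg_PP sg_agc])

fun ev :: "gen list \<Rightarrow> aut" where "ev [] = id" | "ev (g # ws) = pull (sg g) \<circ> ev ws"
fun pm :: "gen list \<Rightarrow> point \<Rightarrow> point" where "pm [] p = p" | "pm (g # ws) p = pm ws (sg g p)"
lemma pm_nil: "pm [] = id" by (rule ext) simp
lemma pm_cons: "pm (g # ws) = pm ws \<circ> sg g" by (rule ext) simp
fun reg :: "gen list \<Rightarrow> point set" where
  "reg [] = NN" | "reg (g # ws) = {p. p \<in> NN \<and> sg g p \<in> reg ws}"

lemma ev_pm: "ev ws = pull (pm ws)"
  by (induction ws) (simp_all only: ev.simps pm_nil pm_cons pull_id pull_comp)
lemma gmap_pm: "gmap (pm ws)"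
  by (induction ws) (simp_all only: pm_nil pm_cons gmap_id gmap_comp gmap_sg)
lemma reg_open: "open (reg ws) \<and> PP \<subseteq> reg ws"
proof (induction ws)
  case Nil then show ?case using open_NN PP_NN by simp
next
  case (Cons g ws)
  have e: "reg (g # ws) = NN \<inter> sg g -` reg ws" by auto
  have "open (NN \<inter> sg g -` reg ws)" using continuous_open_preimage[OF sg_cont open_NN] Cons by blast
  moreover have "PP \<subseteq> NN \<inter> sg g -` reg ws"
  proof
    fix x assume x: "x \<in> PP"
    then have "sg g x \<in> reg ws" using Cons sg_PP by blast
    then show "x \<in> NN \<inter> sg g -` reg ws" using x PP_NN by auto
  qed
  ultimately show ?case unfolding e by blast
qed
lemma ev_append: "ev (a @ b) = ev a \<circ> ev b" by (induction a) (simp_all add: o_assoc)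

definition wr :: "gen list \<Rightarrow> gen list \<Rightarrow> bool" where "wr u v \<longleftrightarrow> aeq (ev u) (ev v)"

lemma wr_base: assumes "\<And>p. p \<in> reg u \<Longrightarrow> p \<in> reg v \<Longrightarrow> agc (pm u p) (pm v p)" shows "wr u v"
  unfolding wr_def ev_pm
  by (rule aeq_pull[OF gmap_pm gmap_pm, of "reg u \<inter> reg v"]) (use reg_open assms in auto)
lemma good_ev: "aeq (ev u) (ev u)"
  unfolding ev_pm by (rule aeq_pull[OF gmap_pm gmap_pm, of UNIV]) (auto simp: agc_def)
lemma wr_refl: "wr u u" by (simp add: wr_def good_ev)
lemma wr_sym: "wr u v \<Longrightarrow> wr v u" by (simp add: wr_def aeq_sym)
lemma wr_trans [trans]: "wr u v \<Longrightarrow> wr v w \<Longrightarrow> wr u w" unfolding wr_def by (rule aeq_trans)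
lemma wr_step: "wr u v \<Longrightarrow> wr (a @ u @ b) (a @ v @ b)"
  unfolding wr_def ev_append by (intro aeq_comp good_ev)
lemma wr_stepI: "wr u v \<Longrightarrow> x = a @ u @ b \<Longrightarrow> y = a @ v @ b \<Longrightarrow> wr x y"
  using wr_step by simp
lemma wr_stepI': "wr v u \<Longrightarrow> x = a @ u @ b \<Longrightarrow> y = a @ v @ b \<Longrightarrow> wr x y"
  using wr_step wr_sym by simp


lemma inv0:
  assumes N0: "p \<in> NN" "(sig_s 0 p) \<in> NN" "(sig_s 0 (sig_s 0 p)) \<in> NN"
  shows "agc (sig_s 0 (sig_s 0 p)) p"
proof -
  define q1 where "q1 = sig_s 0 p"
  have N: "p \<in> NN" "q1 \<in> NN" using N0 by (simp_all add: q1_def)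
  note nz = NN_nz[OF N(1)] NN_nz2[OF N(1)] NN_nz[OF N(2)] NN_nz2[OF N(2)]
  have "agc (sig_s 0 q1) (p)"
    apply (rule agcI)
    apply ((simp_all add: s_tau2 s_taub2 s_alph pi_alph w0_taub2 w0_cc w1_tau2 w1_cc r_cc N mt_def)?,
      (simp_all add: nz field_simps)?,
      (unfold q1_def)?,
      (simp_all add: s_tau2 s_taub2 s_alph pi_alph w0_taub2 w0_cc w1_tau2 w1_cc r_cc N mt_def alph012[OF N(1)])?,
      (simp_all add: nz field_simps)?,
      (simp_all only: numeral_eq_Suc pred_numeral_simps BitM.simps numeral_One One_nat_def power_Suc power_0 mult_1_right)?,
      (simp_all only: numeral_Bit0 numeral_Bit1 numeral_One distrib_left distrib_right mult_1_left mult_1_right)?,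
      (simp_all only: mult.assoc mult.commute mult.left_commute add.assoc add.commute add.left_commute)?)
    done
  then show ?thesis by (simp add: q1_def)
qed

lemma wr_inv0: "wr [S0,S0] []"
  by (rule wr_base) (auto intro!: inv0)

lemma pis0:
  assumes N0: "p \<in> NN" "(sig_pi p) \<in> NN" "(sig_s 0 (sig_pi p)) \<in> NN" "(sig_s 1 p) \<in> NN" "(sig_pi (sig_s 1 p)) \<in> NN"
  shows "agc (sig_s 0 (sig_pi p)) (sig_pi (sig_s 1 p))"
proof -
  define q1 where "q1 = sig_pi p"
  define r1 where "r1 = sig_s 1 p"
  have N: "p \<in> NN" "q1 \<in> NN" "r1 \<in> NN" using N0 by (simp_all add: q1_def r1_def)
  note nz = NN_nz[OF N(1)] NN_nz2[OF N(1)] NN_nz[OF N(2)] NN_nz2[OF N(2)] NN_nz[OF N(3)] NN_nz2[OF N(3)]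
  have "agc (sig_s 0 q1) (sig_pi r1)"
    apply (rule agcI)
    apply ((simp_all add: s_tau2 s_taub2 s_alph pi_alph w0_taub2 w0_cc w1_tau2 w1_cc r_cc N mt_def)?,
      (simp_all add: nz field_simps)?,
      (unfold q1_def r1_def)?,
      (simp_all add: s_tau2 s_taub2 s_alph pi_alph w0_taub2 w0_cc w1_tau2 w1_cc r_cc N mt_def alph012[OF N(1)])?,
      (simp_all add: nz field_simps)?,
      (simp_all only: numeral_eq_Suc pred_numeral_simps BitM.simps numeral_One One_nat_def power_Suc power_0 mult_1_right)?,
      (simp_all only: numeral_Bit0 numeral_Bit1 numeral_One distrib_left distrib_right mult_1_left mult_1_right)?,
      (simp_all only: mult.assoc mult.commute mult.left_commute add.assoc add.commute add.left_commute)?)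
    done
  then show ?thesis by (simp add: q1_def r1_def)
qed

lemma wr_pis0: "wr [Pi,S0] [S1,Pi]"
  by (rule wr_base) (auto intro!: pis0)

lemma inv1:
  assumes N0: "p \<in> NN" "(sig_s 1 p) \<in> NN" "(sig_s 1 (sig_s 1 p)) \<in> NN"
  shows "agc (sig_s 1 (sig_s 1 p)) p"
proof -
  define q1 where "q1 = sig_s 1 p"
  have N: "p \<in> NN" "q1 \<in> NN" using N0 by (simp_all add: q1_def)
  note nz = NN_nz[OF N(1)] NN_nz2[OF N(1)] NN_nz[OF N(2)] NN_nz2[OF N(2)]
  have "agc (sig_s 1 q1) (p)"
    apply (rule agcI)
    apply ((simp_all add: s_tau2 s_taub2 s_alph pi_alph w0_taub2 w0_cc w1_tau2 w1_cc r_cc N mt_def)?,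
      (simp_all add: nz field_simps)?,
      (unfold q1_def)?,
      (simp_all add: s_tau2 s_taub2 s_alph pi_alph w0_taub2 w0_cc w1_tau2 w1_cc r_cc N mt_def alph012[OF N(1)])?,
      (simp_all add: nz field_simps)?,
      (simp_all only: numeral_eq_Suc pred_numeral_simps BitM.simps numeral_One One_nat_def power_Suc power_0 mult_1_right)?,
      (simp_all only: numeral_Bit0 numeral_Bit1 numeral_One distrib_left distrib_right mult_1_left mult_1_right)?,
      (simp_all only: mult.assoc mult.commute mult.left_commute add.assoc add.commute add.left_commute)?)
    done
  then show ?thesis by (simp add: q1_def)
qed

lemma wr_inv1: "wr [S1,S1] []"
  by (rule wr_base) (auto intro!: inv1)

lemma pis1:
  assumes N0: "p \<in> NN" "(sig_pi p) \<in> NN" "(sig_s 1 (sig_pi p)) \<in> NN" "(sig_s 2 p) \<in> NN" "(sig_pi (sig_s 2 p)) \<in> NN"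
  shows "agc (sig_s 1 (sig_pi p)) (sig_pi (sig_s 2 p))"
proof -
  define q1 where "q1 = sig_pi p"
  define r1 where "r1 = sig_s 2 p"
  have N: "p \<in> NN" "q1 \<in> NN" "r1 \<in> NN" using N0 by (simp_all add: q1_def r1_def)
  note nz = NN_nz[OF N(1)] NN_nz2[OF N(1)] NN_nz[OF N(2)] NN_nz2[OF N(2)] NN_nz[OF N(3)] NN_nz2[OF N(3)]
  have "agc (sig_s 1 q1) (sig_pi r1)"
    apply (rule agcI)
    apply ((simp_all add: s_tau2 s_taub2 s_alph pi_alph w0_taub2 w0_cc w1_tau2 w1_cc r_cc N mt_def)?,
      (simp_all add: nz field_simps)?,
      (unfold q1_def r1_def)?,
      (simp_all add: s_tau2 s_taub2 s_alph pi_alph w0_taub2 w0_cc w1_tau2 w1_cc r_cc N mt_def alph012[OF N(1)])?,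
      (simp_all add: nz field_simps)?,
      (simp_all only: numeral_eq_Suc pred_numeral_simps BitM.simps numeral_One One_nat_def power_Suc power_0 mult_1_right)?,
      (simp_all only: numeral_Bit0 numeral_Bit1 numeral_One distrib_left distrib_right mult_1_left mult_1_right)?,
      (simp_all only: mult.assoc mult.commute mult.left_commute add.assoc add.commute add.left_commute)?)
    done
  then show ?thesis by (simp add: q1_def r1_def)
qed

lemma wr_pis1: "wr [Pi,S1] [S2,Pi]"
  by (rule wr_base) (auto intro!: pis1)

lemma inv2:
  assumes N0: "p \<in> NN" "(sig_s 2 p) \<in> NN" "(sig_s 2 (sig_s 2 p)) \<in> NN"
  shows "agc (sig_s 2 (sig_s 2 p)) p"
proof -
  define q1 where "q1 = sig_s 2 p"
  have N: "p \<in> NN" "q1 \<in> NN" using N0 by (simp_all add: q1_def)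
  note nz = NN_nz[OF N(1)] NN_nz2[OF N(1)] NN_nz[OF N(2)] NN_nz2[OF N(2)]
  have "agc (sig_s 2 q1) (p)"
    apply (rule agcI)
    apply ((simp_all add: s_tau2 s_taub2 s_alph pi_alph w0_taub2 w0_cc w1_tau2 w1_cc r_cc N mt_def)?,
      (simp_all add: nz field_simps)?,
      (unfold q1_def)?,
      (simp_all add: s_tau2 s_taub2 s_alph pi_alph w0_taub2 w0_cc w1_tau2 w1_cc r_cc N mt_def alph012[OF N(1)])?,
      (simp_all add: nz field_simps)?,
      (simp_all only: numeral_eq_Suc pred_numeral_simps BitM.simps numeral_One One_nat_def power_Suc power_0 mult_1_right)?,
      (simp_all only: numeral_Bit0 numeral_Bit1 numeral_One distrib_left distrib_right mult_1_left mult_1_right)?,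
      (simp_all only: mult.assoc mult.commute mult.left_commute add.assoc add.commute add.left_commute)?)
    done
  then show ?thesis by (simp add: q1_def)
qed

lemma wr_inv2: "wr [S2,S2] []"
  by (rule wr_base) (auto intro!: inv2)

lemma pis2:
  assumes N0: "p \<in> NN" "(sig_pi p) \<in> NN" "(sig_s 2 (sig_pi p)) \<in> NN" "(sig_s 0 p) \<in> NN" "(sig_pi (sig_s 0 p)) \<in> NN"
  shows "agc (sig_s 2 (sig_pi p)) (sig_pi (sig_s 0 p))"
proof -
  define q1 where "q1 = sig_pi p"
  define r1 where "r1 = sig_s 0 p"
  have N: "p \<in> NN" "q1 \<in> NN" "r1 \<in> NN" using N0 by (simp_all add: q1_def r1_def)
  note nz = NN_nz[OF N(1)] NN_nz2[OF N(1)] NN_nz[OF N(2)] NN_nz2[OF N(2)] NN_nz[OF N(3)] NN_nz2[OF N(3)]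
  have "agc (sig_s 2 q1) (sig_pi r1)"
    apply (rule agcI)
    apply ((simp_all add: s_tau2 s_taub2 s_alph pi_alph w0_taub2 w0_cc w1_tau2 w1_cc r_cc N mt_def)?,
      (simp_all add: nz field_simps)?,
      (unfold q1_def r1_def)?,
      (simp_all add: s_tau2 s_taub2 s_alph pi_alph w0_taub2 w0_cc w1_tau2 w1_cc r_cc N mt_def alph012[OF N(1)])?,
      (simp_all add: nz field_simps)?,
      (simp_all only: numeral_eq_Suc pred_numeral_simps BitM.simps numeral_One One_nat_def power_Suc power_0 mult_1_right)?,
      (simp_all only: numeral_Bit0 numeral_Bit1 numeral_One distrib_left distrib_right mult_1_left mult_1_right)?,
      (simp_all only: mult.assoc mult.commute mult.left_commute add.assoc add.commute add.left_commute)?)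
    done
  then show ?thesis by (simp add: q1_def r1_def)
qed

lemma wr_pis2: "wr [Pi,S2] [S0,Pi]"
  by (rule wr_base) (auto intro!: pis2)

lemma pi3:
  assumes N0: "p \<in> NN" "(sig_pi p) \<in> NN" "(sig_pi (sig_pi p)) \<in> NN" "(sig_pi (sig_pi (sig_pi p))) \<in> NN"
  shows "agc (sig_pi (sig_pi (sig_pi p))) p"
proof -
  define q1 where "q1 = sig_pi p"
  define q2 where "q2 = sig_pi q1"
  have N: "p \<in> NN" "q1 \<in> NN" "q2 \<in> NN" using N0 by (simp_all add: q1_def q2_def)
  note nz = NN_nz[OF N(1)] NN_nz2[OF N(1)] NN_nz[OF N(2)] NN_nz2[OF N(2)] NN_nz[OF N(3)] NN_nz2[OF N(3)]
  have "agc (sig_pi q2) (p)"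
    apply (rule agcI)
    apply ((simp_all add: s_tau2 s_taub2 s_alph pi_alph w0_taub2 w0_cc w1_tau2 w1_cc r_cc N mt_def)?,
      (simp_all add: nz field_simps)?,
      (unfold q2_def)?,
      (simp_all add: s_tau2 s_taub2 s_alph pi_alph w0_taub2 w0_cc w1_tau2 w1_cc r_cc N mt_def)?,
      (simp_all add: nz field_simps)?,
      (unfold q1_def)?,
      (simp_all add: s_tau2 s_taub2 s_alph pi_alph w0_taub2 w0_cc w1_tau2 w1_cc r_cc N mt_def alph012[OF N(1)])?,
      (simp_all add: nz field_simps)?,
      (simp_all only: numeral_eq_Suc pred_numeral_simps BitM.simps numeral_One One_nat_def power_Suc power_0 mult_1_right)?,
      (simp_all only: numeral_Bit0 numeral_Bit1 numeral_One distrib_left distrib_right mult_1_left mult_1_right)?,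
      (simp_all only: mult.assoc mult.commute mult.left_commute add.assoc add.commute add.left_commute)?)
    done
  then show ?thesis by (simp add: q1_def q2_def)
qed

lemma wr_pi3: "wr [Pi,Pi,Pi] []"
  by (rule wr_base) (auto intro!: pi3)

lemma braid:
  assumes N0: "p \<in> NN" "(sig_s 0 p) \<in> NN" "(sig_s 1 (sig_s 0 p)) \<in> NN" "(sig_s 0 (sig_s 1 (sig_s 0 p))) \<in> NN" "(sig_s 1 p) \<in> NN" "(sig_s 0 (sig_s 1 p)) \<in> NN" "(sig_s 1 (sig_s 0 (sig_s 1 p))) \<in> NN"
  shows "agc (sig_s 0 (sig_s 1 (sig_s 0 p))) (sig_s 1 (sig_s 0 (sig_s 1 p)))"
proof -
  define q1 where "q1 = sig_s 0 p"
  define q2 where "q2 = sig_s 1 q1"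
  define r1 where "r1 = sig_s 1 p"
  define r2 where "r2 = sig_s 0 r1"
  have N: "p \<in> NN" "q1 \<in> NN" "q2 \<in> NN" "r1 \<in> NN" "r2 \<in> NN" using N0 by (simp_all add: q1_def q2_def r1_def r2_def)
  note nz = NN_nz[OF N(1)] NN_nz2[OF N(1)] NN_nz[OF N(2)] NN_nz2[OF N(2)] NN_nz[OF N(3)] NN_nz2[OF N(3)] NN_nz[OF N(4)] NN_nz2[OF N(4)] NN_nz[OF N(5)] NN_nz2[OF N(5)]
  have "agc (sig_s 0 q2) (sig_s 1 r2)"
    apply (rule agcI)
    apply ((simp_all add: s_tau2 s_taub2 s_alph pi_alph w0_taub2 w0_cc w1_tau2 w1_cc r_cc N mt_def)?,
      (simp_all add: nz field_simps)?,
      (unfold q2_def r2_def)?,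
      (simp_all add: s_tau2 s_taub2 s_alph pi_alph w0_taub2 w0_cc w1_tau2 w1_cc r_cc N mt_def)?,
      (simp_all add: nz field_simps)?,
      (unfold q1_def r1_def)?,
      (simp_all add: s_tau2 s_taub2 s_alph pi_alph w0_taub2 w0_cc w1_tau2 w1_cc r_cc N mt_def alph012[OF N(1)])?,
      (simp_all add: nz field_simps)?,
      (simp_all only: numeral_eq_Suc pred_numeral_simps BitM.simps numeral_One One_nat_def power_Suc power_0 mult_1_right)?,
      (simp_all only: numeral_Bit0 numeral_Bit1 numeral_One distrib_left distrib_right mult_1_left mult_1_right)?,
      (simp_all only: mult.assoc mult.commute mult.left_commute add.assoc add.commute add.left_commute)?)
    done
  then show ?thesis by (simp add: q1_def q2_def r1_def r2_def)
qed

lemma wr_braid: "wr [S0,S1,S0] [S1,S0,S1]"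
  by (rule wr_base) (auto intro!: braid)

lemma rr:
  assumes N0: "p \<in> NN" "(sig_r p) \<in> NN" "(sig_r (sig_r p)) \<in> NN"
  shows "agc (sig_r (sig_r p)) p"
proof -
  define q1 where "q1 = sig_r p"
  have N: "p \<in> NN" "q1 \<in> NN" using N0 by (simp_all add: q1_def)
  note nz = NN_nz[OF N(1)] NN_nz2[OF N(1)] NN_nz[OF N(2)] NN_nz2[OF N(2)]
  have "agc (sig_r q1) (p)"
    apply (rule agcI)
    apply ((simp_all add: s_tau2 s_taub2 s_alph pi_alph w0_taub2 w0_cc w1_tau2 w1_cc r_cc N mt_def)?,
      (simp_all add: nz field_simps)?,
      (unfold q1_def)?,
      (simp_all add: s_tau2 s_taub2 s_alph pi_alph w0_taub2 w0_cc w1_tau2 w1_cc r_cc N mt_def alph012[OF N(1)])?,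
      (simp_all add: nz field_simps)?,
      (simp_all only: numeral_eq_Suc pred_numeral_simps BitM.simps numeral_One One_nat_def power_Suc power_0 mult_1_right)?,
      (simp_all only: numeral_Bit0 numeral_Bit1 numeral_One distrib_left distrib_right mult_1_left mult_1_right)?,
      (simp_all only: mult.assoc mult.commute mult.left_commute add.assoc add.commute add.left_commute)?)
    done
  then show ?thesis by (simp add: q1_def)
qed

lemma wr_rr: "wr [R,R] []"
  by (rule wr_base) (auto intro!: rr)

lemma ww:
  assumes N0: "p \<in> NN" "(sig_w0 p) \<in> NN" "(sig_w0 (sig_w0 p)) \<in> NN"
  shows "agc (sig_w0 (sig_w0 p)) p"
proof -
  define q1 where "q1 = sig_w0 p"
  have N: "p \<in> NN" "q1 \<in> NN" using N0 by (simp_all add: q1_def)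
  note nz = NN_nz[OF N(1)] NN_nz2[OF N(1)] NN_nz[OF N(2)] NN_nz2[OF N(2)]
  have "agc (sig_w0 q1) (p)"
    apply (rule agcI)
    apply ((simp_all add: s_tau2 s_taub2 s_alph pi_alph w0_taub2 w0_cc w1_tau2 w1_cc r_cc N mt_def)?,
      (simp_all add: nz field_simps)?,
      (unfold q1_def)?,
      (simp_all add: s_tau2 s_taub2 s_alph pi_alph w0_taub2 w0_cc w1_tau2 w1_cc r_cc N mt_def alph012[OF N(1)])?,
      (simp_all add: nz field_simps)?,
      (simp_all only: numeral_eq_Suc pred_numeral_simps BitM.simps numeral_One One_nat_def power_Suc power_0 mult_1_right)?,
      (simp_all only: numeral_Bit0 numeral_Bit1 numeral_One distrib_left distrib_right mult_1_left mult_1_right)?,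
      (simp_all only: mult.assoc mult.commute mult.left_commute add.assoc add.commute add.left_commute)?)
    done
  then show ?thesis by (simp add: q1_def)
qed

lemma wr_ww: "wr [W0,W0] []"
  by (rule wr_base) (auto intro!: ww)

lemma rcS0:
  assumes N0: "p \<in> NN" "(sig_r p) \<in> NN" "(sig_s 0 (sig_r p)) \<in> NN" "(sig_s 0 p) \<in> NN" "(sig_r (sig_s 0 p)) \<in> NN"
  shows "agc (sig_s 0 (sig_r p)) (sig_r (sig_s 0 p))"
proof -
  define q1 where "q1 = sig_r p"
  define r1 where "r1 = sig_s 0 p"
  have N: "p \<in> NN" "q1 \<in> NN" "r1 \<in> NN" using N0 by (simp_all add: q1_def r1_def)
  note nz = NN_nz[OF N(1)] NN_nz2[OF N(1)] NN_nz[OF N(2)] NN_nz2[OF N(2)] NN_nz[OF N(3)] NN_nz2[OF N(3)]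
  have "agc (sig_s 0 q1) (sig_r r1)"
    apply (rule agcI)
    apply ((simp_all add: s_tau2 s_taub2 s_alph pi_alph w0_taub2 w0_cc w1_tau2 w1_cc r_cc N mt_def)?,
      (simp_all add: nz field_simps)?,
      (unfold q1_def r1_def)?,
      (simp_all add: s_tau2 s_taub2 s_alph pi_alph w0_taub2 w0_cc w1_tau2 w1_cc r_cc N mt_def alph012[OF N(1)])?,
      (simp_all add: nz field_simps)?,
      (simp_all only: numeral_eq_Suc pred_numeral_simps BitM.simps numeral_One One_nat_def power_Suc power_0 mult_1_right)?,
      (simp_all only: numeral_Bit0 numeral_Bit1 numeral_One distrib_left distrib_right mult_1_left mult_1_right)?,
      (simp_all only: mult.assoc mult.commute mult.left_commute add.assoc add.commute add.left_commute)?)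
    done
  then show ?thesis by (simp add: q1_def r1_def)
qed

lemma wr_rcS0: "wr [R,S0] [S0,R]"
  by (rule wr_base) (auto intro!: rcS0)

lemma wcS0:
  assumes N0: "p \<in> NN" "(sig_w0 p) \<in> NN" "(sig_s 0 (sig_w0 p)) \<in> NN" "(sig_s 0 p) \<in> NN" "(sig_w0 (sig_s 0 p)) \<in> NN"
  shows "agc (sig_s 0 (sig_w0 p)) (sig_w0 (sig_s 0 p))"
proof -
  define q1 where "q1 = sig_w0 p"
  define r1 where "r1 = sig_s 0 p"
  have N: "p \<in> NN" "q1 \<in> NN" "r1 \<in> NN" using N0 by (simp_all add: q1_def r1_def)
  note nz = NN_nz[OF N(1)] NN_nz2[OF N(1)] NN_nz[OF N(2)] NN_nz2[OF N(2)] NN_nz[OF N(3)] NN_nz2[OF N(3)]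
  have "agc (sig_s 0 q1) (sig_w0 r1)"
    apply (rule agcI)
    apply ((simp_all add: s_tau2 s_taub2 s_alph pi_alph w0_taub2 w0_cc w1_tau2 w1_cc r_cc N mt_def)?,
      (simp_all add: nz field_simps)?,
      (unfold q1_def r1_def)?,
      (simp_all add: s_tau2 s_taub2 s_alph pi_alph w0_taub2 w0_cc w1_tau2 w1_cc r_cc N mt_def alph012[OF N(1)])?,
      (simp_all add: nz field_simps)?,
      (simp_all only: numeral_eq_Suc pred_numeral_simps BitM.simps numeral_One One_nat_def power_Suc power_0 mult_1_right)?,
      (simp_all only: numeral_Bit0 numeral_Bit1 numeral_One distrib_left distrib_right mult_1_left mult_1_right)?,
      (simp_all only: mult.assoc mult.commute mult.left_commute add.assoc add.commute add.left_commute)?)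
    done
  then show ?thesis by (simp add: q1_def r1_def)
qed

lemma wr_wcS0: "wr [W0,S0] [S0,W0]"
  by (rule wr_base) (auto intro!: wcS0)

lemma rcS1:
  assumes N0: "p \<in> NN" "(sig_r p) \<in> NN" "(sig_s 1 (sig_r p)) \<in> NN" "(sig_s 1 p) \<in> NN" "(sig_r (sig_s 1 p)) \<in> NN"
  shows "agc (sig_s 1 (sig_r p)) (sig_r (sig_s 1 p))"
proof -
  define q1 where "q1 = sig_r p"
  define r1 where "r1 = sig_s 1 p"
  have N: "p \<in> NN" "q1 \<in> NN" "r1 \<in> NN" using N0 by (simp_all add: q1_def r1_def)
  note nz = NN_nz[OF N(1)] NN_nz2[OF N(1)] NN_nz[OF N(2)] NN_nz2[OF N(2)] NN_nz[OF N(3)] NN_nz2[OF N(3)]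
  have "agc (sig_s 1 q1) (sig_r r1)"
    apply (rule agcI)
    apply ((simp_all add: s_tau2 s_taub2 s_alph pi_alph w0_taub2 w0_cc w1_tau2 w1_cc r_cc N mt_def)?,
      (simp_all add: nz field_simps)?,
      (unfold q1_def r1_def)?,
      (simp_all add: s_tau2 s_taub2 s_alph pi_alph w0_taub2 w0_cc w1_tau2 w1_cc r_cc N mt_def alph012[OF N(1)])?,
      (simp_all add: nz field_simps)?,
      (simp_all only: numeral_eq_Suc pred_numeral_simps BitM.simps numeral_One One_nat_def power_Suc power_0 mult_1_right)?,
      (simp_all only: numeral_Bit0 numeral_Bit1 numeral_One distrib_left distrib_right mult_1_left mult_1_right)?,
      (simp_all only: mult.assoc mult.commute mult.left_commute add.assoc add.commute add.left_commute)?)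
    done
  then show ?thesis by (simp add: q1_def r1_def)
qed

lemma wr_rcS1: "wr [R,S1] [S1,R]"
  by (rule wr_base) (auto intro!: rcS1)

lemma wcS1:
  assumes N0: "p \<in> NN" "(sig_w0 p) \<in> NN" "(sig_s 1 (sig_w0 p)) \<in> NN" "(sig_s 1 p) \<in> NN" "(sig_w0 (sig_s 1 p)) \<in> NN"
  shows "agc (sig_s 1 (sig_w0 p)) (sig_w0 (sig_s 1 p))"
proof -
  define q1 where "q1 = sig_w0 p"
  define r1 where "r1 = sig_s 1 p"
  have N: "p \<in> NN" "q1 \<in> NN" "r1 \<in> NN" using N0 by (simp_all add: q1_def r1_def)
  note nz = NN_nz[OF N(1)] NN_nz2[OF N(1)] NN_nz[OF N(2)] NN_nz2[OF N(2)] NN_nz[OF N(3)] NN_nz2[OF N(3)]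
  have "agc (sig_s 1 q1) (sig_w0 r1)"
    apply (rule agcI)
    apply ((simp_all add: s_tau2 s_taub2 s_alph pi_alph w0_taub2 w0_cc w1_tau2 w1_cc r_cc N mt_def)?,
      (simp_all add: nz field_simps)?,
      (unfold q1_def r1_def)?,
      (simp_all add: s_tau2 s_taub2 s_alph pi_alph w0_taub2 w0_cc w1_tau2 w1_cc r_cc N mt_def alph012[OF N(1)])?,
      (simp_all add: nz field_simps)?,
      (simp_all only: numeral_eq_Suc pred_numeral_simps BitM.simps numeral_One One_nat_def power_Suc power_0 mult_1_right)?,
      (simp_all only: numeral_Bit0 numeral_Bit1 numeral_One distrib_left distrib_right mult_1_left mult_1_right)?,
      (simp_all only: mult.assoc mult.commute mult.left_commute add.assoc add.commute add.left_commute)?)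
    done
  then show ?thesis by (simp add: q1_def r1_def)
qed

lemma wr_wcS1: "wr [W0,S1] [S1,W0]"
  by (rule wr_base) (auto intro!: wcS1)

lemma rcS2:
  assumes N0: "p \<in> NN" "(sig_r p) \<in> NN" "(sig_s 2 (sig_r p)) \<in> NN" "(sig_s 2 p) \<in> NN" "(sig_r (sig_s 2 p)) \<in> NN"
  shows "agc (sig_s 2 (sig_r p)) (sig_r (sig_s 2 p))"
proof -
  define q1 where "q1 = sig_r p"
  define r1 where "r1 = sig_s 2 p"
  have N: "p \<in> NN" "q1 \<in> NN" "r1 \<in> NN" using N0 by (simp_all add: q1_def r1_def)
  note nz = NN_nz[OF N(1)] NN_nz2[OF N(1)] NN_nz[OF N(2)] NN_nz2[OF N(2)] NN_nz[OF N(3)] NN_nz2[OF N(3)]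
  have "agc (sig_s 2 q1) (sig_r r1)"
    apply (rule agcI)
    apply ((simp_all add: s_tau2 s_taub2 s_alph pi_alph w0_taub2 w0_cc w1_tau2 w1_cc r_cc N mt_def)?,
      (simp_all add: nz field_simps)?,
      (unfold q1_def r1_def)?,
      (simp_all add: s_tau2 s_taub2 s_alph pi_alph w0_taub2 w0_cc w1_tau2 w1_cc r_cc N mt_def alph012[OF N(1)])?,
      (simp_all add: nz field_simps)?,
      (simp_all only: numeral_eq_Suc pred_numeral_simps BitM.simps numeral_One One_nat_def power_Suc power_0 mult_1_right)?,
      (simp_all only: numeral_Bit0 numeral_Bit1 numeral_One distrib_left distrib_right mult_1_left mult_1_right)?,
      (simp_all only: mult.assoc mult.commute mult.left_commute add.assoc add.commute add.left_commute)?)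
    done
  then show ?thesis by (simp add: q1_def r1_def)
qed

lemma wr_rcS2: "wr [R,S2] [S2,R]"
  by (rule wr_base) (auto intro!: rcS2)

lemma wcS2:
  assumes N0: "p \<in> NN" "(sig_w0 p) \<in> NN" "(sig_s 2 (sig_w0 p)) \<in> NN" "(sig_s 2 p) \<in> NN" "(sig_w0 (sig_s 2 p)) \<in> NN"
  shows "agc (sig_s 2 (sig_w0 p)) (sig_w0 (sig_s 2 p))"
proof -
  define q1 where "q1 = sig_w0 p"
  define r1 where "r1 = sig_s 2 p"
  have N: "p \<in> NN" "q1 \<in> NN" "r1 \<in> NN" using N0 by (simp_all add: q1_def r1_def)
  note nz = NN_nz[OF N(1)] NN_nz2[OF N(1)] NN_nz[OF N(2)] NN_nz2[OF N(2)] NN_nz[OF N(3)] NN_nz2[OF N(3)]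
  have "agc (sig_s 2 q1) (sig_w0 r1)"
    apply (rule agcI)
    apply ((simp_all add: s_tau2 s_taub2 s_alph pi_alph w0_taub2 w0_cc w1_tau2 w1_cc r_cc N mt_def)?,
      (simp_all add: nz field_simps)?,
      (unfold q1_def r1_def)?,
      (simp_all add: s_tau2 s_taub2 s_alph pi_alph w0_taub2 w0_cc w1_tau2 w1_cc r_cc N mt_def alph012[OF N(1)])?,
      (simp_all add: nz field_simps)?,
      (simp_all only: numeral_eq_Suc pred_numeral_simps BitM.simps numeral_One One_nat_def power_Suc power_0 mult_1_right)?,
      (simp_all only: numeral_Bit0 numeral_Bit1 numeral_One distrib_left distrib_right mult_1_left mult_1_right)?,
      (simp_all only: mult.assoc mult.commute mult.left_commute add.assoc add.commute add.left_commute)?)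
    done
  then show ?thesis by (simp add: q1_def r1_def)
qed

lemma wr_wcS2: "wr [W0,S2] [S2,W0]"
  by (rule wr_base) (auto intro!: wcS2)

lemma rcPi:
  assumes N0: "p \<in> NN" "(sig_r p) \<in> NN" "(sig_pi (sig_r p)) \<in> NN" "(sig_pi p) \<in> NN" "(sig_r (sig_pi p)) \<in> NN"
  shows "agc (sig_pi (sig_r p)) (sig_r (sig_pi p))"
proof -
  define q1 where "q1 = sig_r p"
  define r1 where "r1 = sig_pi p"
  have N: "p \<in> NN" "q1 \<in> NN" "r1 \<in> NN" using N0 by (simp_all add: q1_def r1_def)
  note nz = NN_nz[OF N(1)] NN_nz2[OF N(1)] NN_nz[OF N(2)] NN_nz2[OF N(2)] NN_nz[OF N(3)] NN_nz2[OF N(3)]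
  have "agc (sig_pi q1) (sig_r r1)"
    apply (rule agcI)
    apply ((simp_all add: s_tau2 s_taub2 s_alph pi_alph w0_taub2 w0_cc w1_tau2 w1_cc r_cc N mt_def)?,
      (simp_all add: nz field_simps)?,
      (unfold q1_def r1_def)?,
      (simp_all add: s_tau2 s_taub2 s_alph pi_alph w0_taub2 w0_cc w1_tau2 w1_cc r_cc N mt_def alph012[OF N(1)])?,
      (simp_all add: nz field_simps)?,
      (simp_all only: numeral_eq_Suc pred_numeral_simps BitM.simps numeral_One One_nat_def power_Suc power_0 mult_1_right)?,
      (simp_all only: numeral_Bit0 numeral_Bit1 numeral_One distrib_left distrib_right mult_1_left mult_1_right)?,
      (simp_all only: mult.assoc mult.commute mult.left_commute add.assoc add.commute add.left_commute)?)
    done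
  then show ?thesis by (simp add: q1_def r1_def)
qed

lemma wr_rcPi: "wr [R,Pi] [Pi,R]"
  by (rule wr_base) (auto intro!: rcPi)

lemma wcPi:
  assumes N0: "p \<in> NN" "(sig_w0 p) \<in> NN" "(sig_pi (sig_w0 p)) \<in> NN" "(sig_pi p) \<in> NN" "(sig_w0 (sig_pi p)) \<in> NN"
  shows "agc (sig_pi (sig_w0 p)) (sig_w0 (sig_pi p))"
proof -
  define q1 where "q1 = sig_w0 p"
  define r1 where "r1 = sig_pi p"
  have N: "p \<in> NN" "q1 \<in> NN" "r1 \<in> NN" using N0 by (simp_all add: q1_def r1_def)
  note nz = NN_nz[OF N(1)] NN_nz2[OF N(1)] NN_nz[OF N(2)] NN_nz2[OF N(2)] NN_nz[OF N(3)] NN_nz2[OF N(3)]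
  have "agc (sig_pi q1) (sig_w0 r1)"
    apply (rule agcI)
    apply ((simp_all add: s_tau2 s_taub2 s_alph pi_alph w0_taub2 w0_cc w1_tau2 w1_cc r_cc N mt_def)?,
      (simp_all add: nz field_simps)?,
      (unfold q1_def r1_def)?,
      (simp_all add: s_tau2 s_taub2 s_alph pi_alph w0_taub2 w0_cc w1_tau2 w1_cc r_cc N mt_def alph012[OF N(1)])?,
      (simp_all add: nz field_simps)?,
      (simp_all only: numeral_eq_Suc pred_numeral_simps BitM.simps numeral_One One_nat_def power_Suc power_0 mult_1_right)?,
      (simp_all only: numeral_Bit0 numeral_Bit1 numeral_One distrib_left distrib_right mult_1_left mult_1_right)?,
      (simp_all only: mult.assoc mult.commute mult.left_commute add.assoc add.commute add.left_commute)?)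
    done
  then show ?thesis by (simp add: q1_def r1_def)
qed

lemma wr_wcPi: "wr [W0,Pi] [Pi,W0]"
  by (rule wr_base) (auto intro!: wcPi)

lemma w1rel:
  assumes N0: "p \<in> NN" "(sig_w1 p) \<in> NN" "(sig_r p) \<in> NN" "(sig_w0 (sig_r p)) \<in> NN" "(sig_r (sig_w0 (sig_r p))) \<in> NN"
  shows "agc (sig_w1 p) (sig_r (sig_w0 (sig_r p)))"
proof -
  define r1 where "r1 = sig_r p"
  define r2 where "r2 = sig_w0 r1"
  have N: "p \<in> NN" "r1 \<in> NN" "r2 \<in> NN" using N0 by (simp_all add: r1_def r2_def)
  note nz = NN_nz[OF N(1)] NN_nz2[OF N(1)] NN_nz[OF N(2)] NN_nz2[OF N(2)] NN_nz[OF N(3)] NN_nz2[OF N(3)]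
  have "agc (sig_w1 p) (sig_r r2)"
    apply (rule agcI)
    apply ((simp_all add: s_tau2 s_taub2 s_alph pi_alph w0_taub2 w0_cc w1_tau2 w1_cc r_cc N mt_def)?,
      (simp_all add: nz field_simps)?,
      (unfold r2_def)?,
      (simp_all add: s_tau2 s_taub2 s_alph pi_alph w0_taub2 w0_cc w1_tau2 w1_cc r_cc N mt_def)?,
      (simp_all add: nz field_simps)?,
      (unfold r1_def)?,
      (simp_all add: s_tau2 s_taub2 s_alph pi_alph w0_taub2 w0_cc w1_tau2 w1_cc r_cc N mt_def alph012[OF N(1)])?,
      (simp_all add: nz field_simps)?,
      (simp_all only: numeral_eq_Suc pred_numeral_simps BitM.simps numeral_One One_nat_def power_Suc power_0 mult_1_right)?,
      (simp_all only: numeral_Bit0 numeral_Bit1 numeral_One distrib_left distrib_right mult_1_left mult_1_right)?,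
      (simp_all only: mult.assoc mult.commute mult.left_commute add.assoc add.commute add.left_commute)?)
    done
  then show ?thesis by (simp add: r1_def r2_def)
qed

lemma wr_w1rel: "wr [W1] [R,W0,R]"
  by (rule wr_base) (auto intro!: w1rel)


lemma d_T1T1i: "wr [Pi,S2,S1,S1,S2,Pi,Pi] []"
proof -
  have "wr [Pi,S2,S1,S1,S2,Pi,Pi] [Pi,S2,S2,Pi,Pi]" by (rule wr_stepI[OF wr_inv1, of _ "[Pi,S2]" "[S2,Pi,Pi]"]) simp_all
  also have "wr [Pi,S2,S2,Pi,Pi] [Pi,Pi,Pi]" by (rule wr_stepI[OF wr_inv2, of _ "[Pi]" "[Pi,Pi]"]) simp_all
  also have "wr [Pi,Pi,Pi] []" by (rule wr_stepI[OF wr_pi3, of _ "[]" "[]"]) simp_all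
  finally show ?thesis .
qed

lemma d_T1iT1: "wr [S1,S2,Pi,Pi,Pi,S2,S1] []"
proof -
  have "wr [S1,S2,Pi,Pi,Pi,S2,S1] [S1,S2,S2,S1]" by (rule wr_stepI[OF wr_pi3, of _ "[S1,S2]" "[S2,S1]"]) simp_all
  also have "wr [S1,S2,S2,S1] [S1,S1]" by (rule wr_stepI[OF wr_inv2, of _ "[S1]" "[S1]"]) simp_all
  also have "wr [S1,S1] []" by (rule wr_stepI[OF wr_inv1, of _ "[]" "[]"]) simp_all
  finally show ?thesis .
qed

lemma d_T2T2i: "wr [S1,Pi,S2,S2,Pi,Pi,S1] []"
proof -
  have "wr [S1,Pi,S2,S2,Pi,Pi,S1] [S1,Pi,Pi,Pi,S1]" by (rule wr_stepI[OF wr_inv2, of _ "[S1,Pi]" "[Pi,Pi,S1]"]) simp_all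
  also have "wr [S1,Pi,Pi,Pi,S1] [S1,S1]" by (rule wr_stepI[OF wr_pi3, of _ "[S1]" "[S1]"]) simp_all
  also have "wr [S1,S1] []" by (rule wr_stepI[OF wr_inv1, of _ "[]" "[]"]) simp_all
  finally show ?thesis .
qed

lemma d_T2iT2: "wr [S2,Pi,Pi,S1,S1,Pi,S2] []"
proof -
  have "wr [S2,Pi,Pi,S1,S1,Pi,S2] [S2,Pi,Pi,Pi,S2]" by (rule wr_stepI[OF wr_inv1, of _ "[S2,Pi,Pi]" "[Pi,S2]"]) simp_all
  also have "wr [S2,Pi,Pi,Pi,S2] [S2,S2]" by (rule wr_stepI[OF wr_pi3, of _ "[S2]" "[S2]"]) simp_all
  also have "wr [S2,S2] []" by (rule wr_stepI[OF wr_inv2, of _ "[]" "[]"]) simp_all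
  finally show ?thesis .
qed

lemma d_T4T4i: "wr [R,W0,W0,R] []"
proof -
  have "wr [R,W0,W0,R] [R,R]" by (rule wr_stepI[OF wr_ww, of _ "[R]" "[R]"]) simp_all
  also have "wr [R,R] []" by (rule wr_stepI[OF wr_rr, of _ "[]" "[]"]) simp_all
  finally show ?thesis .
qed

lemma d_T4iT4: "wr [W0,R,R,W0] []"
proof -
  have "wr [W0,R,R,W0] [W0,W0]" by (rule wr_stepI[OF wr_rr, of _ "[W0]" "[W0]"]) simp_all
  also have "wr [W0,W0] []" by (rule wr_stepI[OF wr_ww, of _ "[]" "[]"]) simp_all
  finally show ?thesis .
qed

lemma d_T12: "wr [Pi,S2,S1,S1,Pi,S2] [S1,Pi,S2,Pi,S2,S1]"
proof -
  have "wr [Pi,S2,S1,S1,Pi,S2] [Pi,S2,Pi,S2]" by (rule wr_stepI[OF wr_inv1, of _ "[Pi,S2]" "[Pi,S2]"]) simp_all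
  also have "wr [Pi,S2,Pi,S2] [S1,S1,Pi,S2,Pi,S2]" by (rule wr_stepI'[OF wr_inv1, of _ "[]" "[Pi,S2,Pi,S2]"]) simp_all
  also have "wr [S1,S1,Pi,S2,Pi,S2] [S1,S1,S0,Pi,Pi,S2]" by (rule wr_stepI[OF wr_pis2, of _ "[S1,S1]" "[Pi,S2]"]) simp_all
  also have "wr [S1,S1,S0,Pi,Pi,S2] [S1,S1,S0,Pi,S0,Pi]" by (rule wr_stepI[OF wr_pis2, of _ "[S1,S1,S0,Pi]" "[]"]) simp_all
  also have "wr [S1,S1,S0,Pi,S0,Pi] [S1,S1,S0,S1,Pi,Pi]" by (rule wr_stepI[OF wr_pis0, of _ "[S1,S1,S0]" "[Pi]"]) simp_all
  also have "wr [S1,S1,S0,S1,Pi,Pi] [S1,S0,S1,S0,Pi,Pi]" by (rule wr_stepI'[OF wr_braid, of _ "[S1]" "[Pi,Pi]"]) simp_all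
  also have "wr [S1,S0,S1,S0,Pi,Pi] [S1,S0,S1,Pi,S2,Pi]" by (rule wr_stepI'[OF wr_pis2, of _ "[S1,S0,S1]" "[Pi]"]) simp_all
  also have "wr [S1,S0,S1,Pi,S2,Pi] [S1,S0,S1,Pi,Pi,S1]" by (rule wr_stepI'[OF wr_pis1, of _ "[S1,S0,S1,Pi]" "[]"]) simp_all
  also have "wr [S1,S0,S1,Pi,Pi,S1] [S1,S0,Pi,S0,Pi,S1]" by (rule wr_stepI'[OF wr_pis0, of _ "[S1,S0]" "[Pi,S1]"]) simp_all
  also have "wr [S1,S0,Pi,S0,Pi,S1] [S1,S0,Pi,Pi,S2,S1]" by (rule wr_stepI'[OF wr_pis2, of _ "[S1,S0,Pi]" "[S1]"]) simp_all
  also have "wr [S1,S0,Pi,Pi,S2,S1] [S1,Pi,S2,Pi,S2,S1]" by (rule wr_stepI'[OF wr_pis2, of _ "[S1]" "[Pi,S2,S1]"]) simp_all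
  finally show ?thesis .
qed

lemma d_T41: "wr [R,W0,Pi,S2,S1] [Pi,S2,S1,R,W0]"
proof -
  have "wr [R,W0,Pi,S2,S1] [R,Pi,W0,S2,S1]" by (rule wr_stepI[OF wr_wcPi, of _ "[R]" "[S2,S1]"]) simp_all
  also have "wr [R,Pi,W0,S2,S1] [R,Pi,S2,W0,S1]" by (rule wr_stepI[OF wr_wcS2, of _ "[R,Pi]" "[S1]"]) simp_all
  also have "wr [R,Pi,S2,W0,S1] [Pi,R,S2,W0,S1]" by (rule wr_stepI[OF wr_rcPi, of _ "[]" "[S2,W0,S1]"]) simp_all
  also have "wr [Pi,R,S2,W0,S1] [Pi,S2,R,W0,S1]" by (rule wr_stepI[OF wr_rcS2, of _ "[Pi]" "[W0,S1]"]) simp_all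
  also have "wr [Pi,S2,R,W0,S1] [Pi,S2,R,S1,W0]" by (rule wr_stepI[OF wr_wcS1, of _ "[Pi,S2,R]" "[]"]) simp_all
  also have "wr [Pi,S2,R,S1,W0] [Pi,S2,S1,R,W0]" by (rule wr_stepI[OF wr_rcS1, of _ "[Pi,S2]" "[W0]"]) simp_all
  finally show ?thesis .
qed

lemma d_T42: "wr [R,W0,S1,Pi,S2] [S1,Pi,S2,R,W0]"
proof -
  have "wr [R,W0,S1,Pi,S2] [R,S1,W0,Pi,S2]" by (rule wr_stepI[OF wr_wcS1, of _ "[R]" "[Pi,S2]"]) simp_all
  also have "wr [R,S1,W0,Pi,S2] [S1,R,W0,Pi,S2]" by (rule wr_stepI[OF wr_rcS1, of _ "[]" "[W0,Pi,S2]"]) simp_all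
  also have "wr [S1,R,W0,Pi,S2] [S1,R,Pi,W0,S2]" by (rule wr_stepI[OF wr_wcPi, of _ "[S1,R]" "[S2]"]) simp_all
  also have "wr [S1,R,Pi,W0,S2] [S1,Pi,R,W0,S2]" by (rule wr_stepI[OF wr_rcPi, of _ "[S1]" "[W0,S2]"]) simp_all
  also have "wr [S1,Pi,R,W0,S2] [S1,Pi,R,S2,W0]" by (rule wr_stepI[OF wr_wcS2, of _ "[S1,Pi,R]" "[]"]) simp_all
  also have "wr [S1,Pi,R,S2,W0] [S1,Pi,S2,R,W0]" by (rule wr_stepI[OF wr_rcS2, of _ "[S1,Pi]" "[W0]"]) simp_all
  finally show ?thesis .
qed

lemma c_s0_1: "wr [S0,Pi,S2,S1] [S1,S2,Pi,Pi,S2,Pi,Pi,S1,S0]"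
proof -
  have "wr [S0,Pi,S2,S1] [S0,Pi,S2,S0,S0,S1]" by (rule wr_stepI'[OF wr_inv0, of _ "[S0,Pi,S2]" "[S1]"]) simp_all
  also have "wr [S0,Pi,S2,S0,S0,S1] [S0,Pi,S2,S0,S0,S1,S0,S0]" by (rule wr_stepI'[OF wr_inv0, of _ "[S0,Pi,S2,S0,S0,S1]" "[]"]) simp_all
  also have "wr [S0,Pi,S2,S0,S0,S1,S0,S0] [S0,S0,Pi,S0,S0,S1,S0,S0]" by (rule wr_stepI[OF wr_pis2, of _ "[S0]" "[S0,S0,S1,S0,S0]"]) simp_all
  also have "wr [S0,S0,Pi,S0,S0,S1,S0,S0] [Pi,S0,S0,S1,S0,S0]" by (rule wr_stepI[OF wr_inv0, of _ "[]" "[Pi,S0,S0,S1,S0,S0]"]) simp_all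
  also have "wr [Pi,S0,S0,S1,S0,S0] [S1,Pi,S0,S1,S0,S0]" by (rule wr_stepI[OF wr_pis0, of _ "[]" "[S0,S1,S0,S0]"]) simp_all
  also have "wr [S1,Pi,S0,S1,S0,S0] [S1,Pi,S1,S0,S1,S0]" by (rule wr_stepI[OF wr_braid, of _ "[S1,Pi]" "[S0]"]) simp_all
  also have "wr [S1,Pi,S1,S0,S1,S0] [S1,Pi,S1,S0,Pi,Pi,Pi,S1,S0]" by (rule wr_stepI'[OF wr_pi3, of _ "[S1,Pi,S1,S0]" "[S1,S0]"]) simp_all
  also have "wr [S1,Pi,S1,S0,Pi,Pi,Pi,S1,S0] [S1,Pi,S1,Pi,S2,Pi,Pi,S1,S0]" by (rule wr_stepI'[OF wr_pis2, of _ "[S1,Pi,S1]" "[Pi,Pi,S1,S0]"]) simp_all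
  also have "wr [S1,Pi,S1,Pi,S2,Pi,Pi,S1,S0] [S1,S2,Pi,Pi,S2,Pi,Pi,S1,S0]" by (rule wr_stepI[OF wr_pis1, of _ "[S1]" "[Pi,S2,Pi,Pi,S1,S0]"]) simp_all
  finally show ?thesis .
qed

lemma c_s0_2: "wr [S0,S1,Pi,S2] [S1,Pi,S2,S0]"
proof -
  have "wr [S0,S1,Pi,S2] [S0,S1,S0,Pi]" by (rule wr_stepI[OF wr_pis2, of _ "[S0,S1]" "[]"]) simp_all
  also have "wr [S0,S1,S0,Pi] [S1,S0,S1,Pi]" by (rule wr_stepI[OF wr_braid, of _ "[]" "[Pi]"]) simp_all
  also have "wr [S1,S0,S1,Pi] [S1,S0,Pi,S0]" by (rule wr_stepI'[OF wr_pis0, of _ "[S1,S0]" "[]"]) simp_all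
  also have "wr [S1,S0,Pi,S0] [S1,Pi,S2,S0]" by (rule wr_stepI'[OF wr_pis2, of _ "[S1]" "[S0]"]) simp_all
  finally show ?thesis .
qed

lemma c_s0_4: "wr [S0,R,W0] [R,W0,S0]"
proof -
  have "wr [S0,R,W0] [R,S0,W0]" by (rule wr_stepI'[OF wr_rcS0, of _ "[]" "[W0]"]) simp_all
  also have "wr [R,S0,W0] [R,W0,S0]" by (rule wr_stepI'[OF wr_wcS0, of _ "[R]" "[]"]) simp_all
  finally show ?thesis .
qed

lemma c_s1_1: "wr [S1,Pi,S2,S1] [S1,Pi,S2,S1]" by (rule wr_refl)

lemma c_s1_2: "wr [S1,S1,Pi,S2] [Pi,S2,S1,S1]"
proof -
  have "wr [S1,S1,Pi,S2] [Pi,S2]" by (rule wr_stepI[OF wr_inv1, of _ "[]" "[Pi,S2]"]) simp_all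
  also have "wr [Pi,S2] [Pi,S2,S1,S1]" by (rule wr_stepI'[OF wr_inv1, of _ "[Pi,S2]" "[]"]) simp_all
  finally show ?thesis .
qed

lemma c_s1_4: "wr [S1,R,W0] [R,W0,S1]"
proof -
  have "wr [S1,R,W0] [R,S1,W0]" by (rule wr_stepI'[OF wr_rcS1, of _ "[]" "[W0]"]) simp_all
  also have "wr [R,S1,W0] [R,W0,S1]" by (rule wr_stepI'[OF wr_wcS1, of _ "[R]" "[]"]) simp_all
  finally show ?thesis .
qed

lemma c_s2_1: "wr [S2,Pi,S2,S1] [Pi,S2,S1,S2]"
proof -
  have "wr [S2,Pi,S2,S1] [Pi,S1,S2,S1]" by (rule wr_stepI'[OF wr_pis1, of _ "[]" "[S2,S1]"]) simp_all
  also have "wr [Pi,S1,S2,S1] [Pi,S1,S2,S1,Pi,Pi,Pi]" by (rule wr_stepI'[OF wr_pi3, of _ "[Pi,S1,S2,S1]" "[]"]) simp_all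
  also have "wr [Pi,S1,S2,S1,Pi,Pi,Pi] [Pi,S1,S2,Pi,S0,Pi,Pi]" by (rule wr_stepI'[OF wr_pis0, of _ "[Pi,S1,S2]" "[Pi,Pi]"]) simp_all
  also have "wr [Pi,S1,S2,Pi,S0,Pi,Pi] [Pi,S1,Pi,S1,S0,Pi,Pi]" by (rule wr_stepI'[OF wr_pis1, of _ "[Pi,S1]" "[S0,Pi,Pi]"]) simp_all
  also have "wr [Pi,S1,Pi,S1,S0,Pi,Pi] [Pi,Pi,S0,S1,S0,Pi,Pi]" by (rule wr_stepI'[OF wr_pis0, of _ "[Pi]" "[S1,S0,Pi,Pi]"]) simp_all
  also have "wr [Pi,Pi,S0,S1,S0,Pi,Pi] [Pi,Pi,S1,S0,S1,Pi,Pi]" by (rule wr_stepI[OF wr_braid, of _ "[Pi,Pi]" "[Pi,Pi]"]) simp_all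
  also have "wr [Pi,Pi,S1,S0,S1,Pi,Pi] [Pi,S2,Pi,S0,S1,Pi,Pi]" by (rule wr_stepI[OF wr_pis1, of _ "[Pi]" "[S0,S1,Pi,Pi]"]) simp_all
  also have "wr [Pi,S2,Pi,S0,S1,Pi,Pi] [Pi,S2,S1,Pi,S1,Pi,Pi]" by (rule wr_stepI[OF wr_pis0, of _ "[Pi,S2]" "[S1,Pi,Pi]"]) simp_all
  also have "wr [Pi,S2,S1,Pi,S1,Pi,Pi] [Pi,S2,S1,S2,Pi,Pi,Pi]" by (rule wr_stepI[OF wr_pis1, of _ "[Pi,S2,S1]" "[Pi,Pi]"]) simp_all
  also have "wr [Pi,S2,S1,S2,Pi,Pi,Pi] [Pi,S2,S1,S2]" by (rule wr_stepI[OF wr_pi3, of _ "[Pi,S2,S1,S2]" "[]"]) simp_all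
  finally show ?thesis .
qed

lemma c_s2_2: "wr [S2,S1,Pi,S2] [S1,S2,Pi,Pi,S2,Pi,Pi,S1,S2]"
proof -
  have "wr [S2,S1,Pi,S2] [S2,Pi,S0,S2]" by (rule wr_stepI'[OF wr_pis0, of _ "[S2]" "[S2]"]) simp_all
  also have "wr [S2,Pi,S0,S2] [S2,Pi,S0,S1,S1,S2]" by (rule wr_stepI'[OF wr_inv1, of _ "[S2,Pi,S0]" "[S2]"]) simp_all
  also have "wr [S2,Pi,S0,S1,S1,S2] [Pi,S1,S0,S1,S1,S2]" by (rule wr_stepI'[OF wr_pis1, of _ "[]" "[S0,S1,S1,S2]"]) simp_all
  also have "wr [Pi,S1,S0,S1,S1,S2] [Pi,S0,S1,S0,S1,S2]" by (rule wr_stepI'[OF wr_braid, of _ "[Pi]" "[S1,S2]"]) simp_all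
  also have "wr [Pi,S0,S1,S0,S1,S2] [Pi,S0,S1,S0,Pi,Pi,Pi,S1,S2]" by (rule wr_stepI'[OF wr_pi3, of _ "[Pi,S0,S1,S0]" "[S1,S2]"]) simp_all
  also have "wr [Pi,S0,S1,S0,Pi,Pi,Pi,S1,S2] [Pi,S0,S1,Pi,S2,Pi,Pi,S1,S2]" by (rule wr_stepI'[OF wr_pis2, of _ "[Pi,S0,S1]" "[Pi,Pi,S1,S2]"]) simp_all
  also have "wr [Pi,S0,S1,Pi,S2,Pi,Pi,S1,S2] [S1,Pi,S1,Pi,S2,Pi,Pi,S1,S2]" by (rule wr_stepI[OF wr_pis0, of _ "[]" "[S1,Pi,S2,Pi,Pi,S1,S2]"]) simp_all
  also have "wr [S1,Pi,S1,Pi,S2,Pi,Pi,S1,S2] [S1,S2,Pi,Pi,S2,Pi,Pi,S1,S2]" by (rule wr_stepI[OF wr_pis1, of _ "[S1]" "[Pi,S2,Pi,Pi,S1,S2]"]) simp_all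
  finally show ?thesis .
qed

lemma c_s2_4: "wr [S2,R,W0] [R,W0,S2]"
proof -
  have "wr [S2,R,W0] [R,S2,W0]" by (rule wr_stepI'[OF wr_rcS2, of _ "[]" "[W0]"]) simp_all
  also have "wr [R,S2,W0] [R,W0,S2]" by (rule wr_stepI'[OF wr_wcS2, of _ "[R]" "[]"]) simp_all
  finally show ?thesis .
qed

lemma c_pi_1: "wr [Pi,Pi,S2,S1] [S1,Pi,S2,Pi]"
proof -
  have "wr [Pi,Pi,S2,S1] [Pi,S0,Pi,S1]" by (rule wr_stepI[OF wr_pis2, of _ "[Pi]" "[S1]"]) simp_all
  also have "wr [Pi,S0,Pi,S1] [S1,Pi,Pi,S1]" by (rule wr_stepI[OF wr_pis0, of _ "[]" "[Pi,S1]"]) simp_all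
  also have "wr [S1,Pi,Pi,S1] [S1,Pi,S2,Pi]" by (rule wr_stepI[OF wr_pis1, of _ "[S1,Pi]" "[]"]) simp_all
  finally show ?thesis .
qed

lemma c_pi_2: "wr [Pi,S1,Pi,S2] [S1,S2,Pi,Pi,S2,Pi,Pi,S1,Pi]"
proof -
  have "wr [Pi,S1,Pi,S2] [Pi,S0,S0,S1,Pi,S2]" by (rule wr_stepI'[OF wr_inv0, of _ "[Pi]" "[S1,Pi,S2]"]) simp_all
  also have "wr [Pi,S0,S0,S1,Pi,S2] [S1,Pi,S0,S1,Pi,S2]" by (rule wr_stepI[OF wr_pis0, of _ "[]" "[S0,S1,Pi,S2]"]) simp_all
  also have "wr [S1,Pi,S0,S1,Pi,S2] [S1,Pi,S0,S1,S0,Pi]" by (rule wr_stepI[OF wr_pis2, of _ "[S1,Pi,S0,S1]" "[]"]) simp_all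
  also have "wr [S1,Pi,S0,S1,S0,Pi] [S1,Pi,S1,S0,S1,Pi]" by (rule wr_stepI[OF wr_braid, of _ "[S1,Pi]" "[Pi]"]) simp_all
  also have "wr [S1,Pi,S1,S0,S1,Pi] [S1,Pi,S1,S0,Pi,Pi,Pi,S1,Pi]" by (rule wr_stepI'[OF wr_pi3, of _ "[S1,Pi,S1,S0]" "[S1,Pi]"]) simp_all
  also have "wr [S1,Pi,S1,S0,Pi,Pi,Pi,S1,Pi] [S1,Pi,S1,Pi,S2,Pi,Pi,S1,Pi]" by (rule wr_stepI'[OF wr_pis2, of _ "[S1,Pi,S1]" "[Pi,Pi,S1,Pi]"]) simp_all
  also have "wr [S1,Pi,S1,Pi,S2,Pi,Pi,S1,Pi] [S1,S2,Pi,Pi,S2,Pi,Pi,S1,Pi]" by (rule wr_stepI[OF wr_pis1, of _ "[S1]" "[Pi,S2,Pi,Pi,S1,Pi]"]) simp_all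
  finally show ?thesis .
qed

lemma c_pi_4: "wr [Pi,R,W0] [R,W0,Pi]"
proof -
  have "wr [Pi,R,W0] [R,Pi,W0]" by (rule wr_stepI'[OF wr_rcPi, of _ "[]" "[W0]"]) simp_all
  also have "wr [R,Pi,W0] [R,W0,Pi]" by (rule wr_stepI'[OF wr_wcPi, of _ "[R]" "[]"]) simp_all
  finally show ?thesis .
qed

lemma c_w0_1: "wr [W0,Pi,S2,S1] [Pi,S2,S1,W0]"
proof -
  have "wr [W0,Pi,S2,S1] [Pi,W0,S2,S1]" by (rule wr_stepI[OF wr_wcPi, of _ "[]" "[S2,S1]"]) simp_all
  also have "wr [Pi,W0,S2,S1] [Pi,S2,W0,S1]" by (rule wr_stepI[OF wr_wcS2, of _ "[Pi]" "[S1]"]) simp_all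
  also have "wr [Pi,S2,W0,S1] [Pi,S2,S1,W0]" by (rule wr_stepI[OF wr_wcS1, of _ "[Pi,S2]" "[]"]) simp_all
  finally show ?thesis .
qed

lemma c_w0_2: "wr [W0,S1,Pi,S2] [S1,Pi,S2,W0]"
proof -
  have "wr [W0,S1,Pi,S2] [S1,W0,Pi,S2]" by (rule wr_stepI[OF wr_wcS1, of _ "[]" "[Pi,S2]"]) simp_all
  also have "wr [S1,W0,Pi,S2] [S1,Pi,W0,S2]" by (rule wr_stepI[OF wr_wcPi, of _ "[S1]" "[S2]"]) simp_all
  also have "wr [S1,Pi,W0,S2] [S1,Pi,S2,W0]" by (rule wr_stepI[OF wr_wcS2, of _ "[S1,Pi]" "[]"]) simp_all
  finally show ?thesis .
qed

lemma c_w0_4: "wr [W0,R,W0] [W0,R,W0]" by (rule wr_refl)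

lemma c_r_1: "wr [R,Pi,S2,S1] [Pi,S2,S1,R]"
proof -
  have "wr [R,Pi,S2,S1] [Pi,R,S2,S1]" by (rule wr_stepI[OF wr_rcPi, of _ "[]" "[S2,S1]"]) simp_all
  also have "wr [Pi,R,S2,S1] [Pi,S2,R,S1]" by (rule wr_stepI[OF wr_rcS2, of _ "[Pi]" "[S1]"]) simp_all
  also have "wr [Pi,S2,R,S1] [Pi,S2,S1,R]" by (rule wr_stepI[OF wr_rcS1, of _ "[Pi,S2]" "[]"]) simp_all
  finally show ?thesis .
qed

lemma c_r_2: "wr [R,S1,Pi,S2] [S1,Pi,S2,R]"
proof -
  have "wr [R,S1,Pi,S2] [S1,R,Pi,S2]" by (rule wr_stepI[OF wr_rcS1, of _ "[]" "[Pi,S2]"]) simp_all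
  also have "wr [S1,R,Pi,S2] [S1,Pi,R,S2]" by (rule wr_stepI[OF wr_rcPi, of _ "[S1]" "[S2]"]) simp_all
  also have "wr [S1,Pi,R,S2] [S1,Pi,S2,R]" by (rule wr_stepI[OF wr_rcS2, of _ "[S1,Pi]" "[]"]) simp_all
  finally show ?thesis .
qed

lemma c_r_4: "wr [R,R,W0] [W0,R,R]"
proof -
  have "wr [R,R,W0] [W0]" by (rule wr_stepI[OF wr_rr, of _ "[]" "[W0]"]) simp_all
  also have "wr [W0] [W0,R,R]" by (rule wr_stepI'[OF wr_rr, of _ "[W0]" "[]"]) simp_all
  finally show ?thesis .
qed


definition ip :: "aut \<Rightarrow> aut \<Rightarrow> bool" where
  "ip A Ai \<longleftrightarrow> aeq A A \<and> aeq Ai Ai \<and> aeq (A \<circ> Ai) id \<and> aeq (Ai \<circ> A) id"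

lemma app: "aeq A B \<Longrightarrow> geq f g \<Longrightarrow> geq (A f) (B g)" by (simp add: aeq_def)

lemma good_funpow: "aeq A A \<Longrightarrow> aeq (A ^^ n) (A ^^ n)"
  by (induction n) (simp_all add: aeq_id aeq_comp)

lemma conj_nat:
  assumes X: "aeq X X" and A: "aeq A A" and W: "aeq W W" and h: "aeq (X \<circ> A) (W \<circ> X)"
  shows "aeq (X \<circ> A ^^ n) (W ^^ n \<circ> X)"
proof (induction n)
  case 0 show ?case using X by simp
next
  case (Suc n)
  have 1: "aeq ((X \<circ> A) \<circ> A ^^ n) ((W \<circ> X) \<circ> A ^^ n)" by (rule aeq_comp[OF h good_funpow[OF A]])
  have 2: "aeq (W \<circ> (X \<circ> A ^^ n)) (W \<circ> (W ^^ n \<circ> X))" by (rule aeq_comp[OF W Suc.IH])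
  have e1: "X \<circ> A ^^ Suc n = (X \<circ> A) \<circ> A ^^ n" by (simp only: funpow.simps comp_assoc)
  have e2: "(W \<circ> X) \<circ> A ^^ n = W \<circ> (X \<circ> A ^^ n)" by (simp only: comp_assoc)
  have e3: "W ^^ Suc n \<circ> X = W \<circ> (W ^^ n \<circ> X)" by (simp only: funpow.simps comp_assoc)
  show ?case unfolding e1 e3 using aeq_trans[OF 1] 2 unfolding e2 by blast
qed

lemma ip_sym: "ip A Ai \<Longrightarrow> ip Ai A" by (simp add: ip_def)

lemma conj_inv:
  assumes "ip A Ai" "ip W Wi" "aeq X X" "aeq (X \<circ> A) (W \<circ> X)"
  shows "aeq (X \<circ> Ai) (Wi \<circ> X)"
proof -
  have A: "aeq A A" "aeq Ai Ai" "aeq (A \<circ> Ai) id" using assms(1) by (auto simp: ip_def)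
  have W: "aeq W W" "aeq Wi Wi" "aeq (Wi \<circ> W) id" using assms(2) by (auto simp: ip_def)
  have 1: "aeq (id \<circ> (X \<circ> Ai)) ((Wi \<circ> W) \<circ> (X \<circ> Ai))"
    by (rule aeq_comp[OF aeq_sym[OF W(3)] aeq_comp[OF assms(3) A(2)]])
  have 2: "aeq (Wi \<circ> ((W \<circ> X) \<circ> Ai)) (Wi \<circ> ((X \<circ> A) \<circ> Ai))"
    by (rule aeq_comp[OF W(2) aeq_comp[OF aeq_sym[OF assms(4)] A(2)]])
  have 3: "aeq (Wi \<circ> (X \<circ> (A \<circ> Ai))) (Wi \<circ> (X \<circ> id))"
    by (rule aeq_comp[OF W(2) aeq_comp[OF assms(3) A(3)]])
  have "aeq (id \<circ> (X \<circ> Ai)) (Wi \<circ> ((X \<circ> A) \<circ> Ai))"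
    using aeq_trans[OF 1] 2 by (simp add: comp_assoc)
  then have "aeq (id \<circ> (X \<circ> Ai)) (Wi \<circ> (X \<circ> id))"
    using aeq_trans[OF _ 3] by (simp add: comp_assoc)
  then show ?thesis by simp
qed

lemma ipow_neg: "ipow A Ai (- k) = ipow Ai A k"
  by (simp add: ipow_def)

lemma good_ipow: "ip A Ai \<Longrightarrow> aeq (ipow A Ai k) (ipow A Ai k)"
  by (simp add: ipow_def ip_def good_funpow)

lemma conj_ipow:
  assumes "ip A Ai" "ip W Wi" "aeq X X" "aeq (X \<circ> A) (W \<circ> X)"
  shows "aeq (X \<circ> ipow A Ai k) (ipow W Wi k \<circ> X)"
proof -
  have A: "aeq A A" "aeq Ai Ai" using assms(1) by (auto simp: ip_def)
  have W: "aeq W W" "aeq Wi Wi" using assms(2) by (auto simp: ip_def)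
  show ?thesis
  proof (cases "0 \<le> k")
    case True then show ?thesis using conj_nat[OF assms(3) A(1) W(1) assms(4)] by (simp add: ipow_def)
  next
    case False then show ?thesis using conj_nat[OF assms(3) A(2) W(2) conj_inv[OF assms]] by (simp add: ipow_def)
  qed
qed

lemma ip_comp: assumes "ip A Ai" "ip B Bi" shows "ip (A \<circ> B) (Bi \<circ> Ai)"
proof -
  have A: "aeq A A" "aeq Ai Ai" "aeq (A \<circ> Ai) id" "aeq (Ai \<circ> A) id" using assms(1) by (auto simp: ip_def)
  have B: "aeq B B" "aeq Bi Bi" "aeq (B \<circ> Bi) id" "aeq (Bi \<circ> B) id" using assms(2) by (auto simp: ip_def)
  have 1: "aeq (A \<circ> ((B \<circ> Bi) \<circ> Ai)) (A \<circ> (id \<circ> Ai))" by (rule aeq_comp[OF A(1) aeq_comp[OF B(3) A(2)]])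
  have 2: "aeq (Bi \<circ> ((Ai \<circ> A) \<circ> B)) (Bi \<circ> (id \<circ> B))" by (rule aeq_comp[OF B(2) aeq_comp[OF A(4) B(1)]])
  have e1: "(A \<circ> B) \<circ> (Bi \<circ> Ai) = A \<circ> ((B \<circ> Bi) \<circ> Ai)" "A \<circ> (id \<circ> Ai) = A \<circ> Ai" by (simp_all only: comp_assoc id_comp)
  have e2: "(Bi \<circ> Ai) \<circ> (A \<circ> B) = Bi \<circ> ((Ai \<circ> A) \<circ> B)" "Bi \<circ> (id \<circ> B) = Bi \<circ> B" by (simp_all only: comp_assoc id_comp)
  have "aeq ((A \<circ> B) \<circ> (Bi \<circ> Ai)) id" unfolding e1 using aeq_trans[OF 1[unfolded e1(2)] A(3)] .
  moreover have "aeq ((Bi \<circ> Ai) \<circ> (A \<circ> B)) id" unfolding e2 using aeq_trans[OF 2[unfolded e2(2)] B(4)] .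
  ultimately show ?thesis unfolding ip_def by (simp add: aeq_comp A B)
qed

lemma mix: assumes "ip A Ai" shows "aeq (A ^^ m \<circ> Ai ^^ n) (ipow A Ai (int m - int n))"
proof -
  have A: "aeq A A" "aeq Ai Ai" "aeq (A \<circ> Ai) id" using assms by (auto simp: ip_def)
  show ?thesis
  proof (induction n arbitrary: m)
    case 0 show ?case using good_ipow[OF assms, of "int m"] by (simp add: ipow_def)
  next
    case (Suc n)
    show ?case
    proof (cases m)
      case 0
      have e2: "ipow A Ai (int m - int (Suc n)) = Ai ^^ Suc n" using 0 by (simp add: ipow_def nat_add_distrib)
      have e: "A ^^ m \<circ> Ai ^^ Suc n = Ai ^^ Suc n" using 0 by (simp only: funpow.simps(1) id_comp)
      show ?thesis unfolding e e2 by (rule good_funpow[OF A(2)])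
    next
      case (Suc m')
      have a1: "A ^^ m = A ^^ m' \<circ> A" using Suc funpow_Suc_right by metis
      have a2: "Ai ^^ Suc n = Ai \<circ> Ai ^^ n" by (rule funpow.simps(2))
      have e: "A ^^ m \<circ> Ai ^^ Suc n = A ^^ m' \<circ> ((A \<circ> Ai) \<circ> Ai ^^ n)"
        by (simp only: a1 a2 comp_assoc)
      have 1: "aeq (A ^^ m' \<circ> ((A \<circ> Ai) \<circ> Ai ^^ n)) (A ^^ m' \<circ> (id \<circ> Ai ^^ n))"
        by (rule aeq_comp[OF good_funpow[OF A(1)] aeq_comp[OF A(3) good_funpow[OF A(2)]]])
      have 2: "aeq (A ^^ m' \<circ> Ai ^^ n) (ipow A Ai (int m' - int n))" by (rule Suc.IH)
      have 3: "aeq (A ^^ m' \<circ> ((A \<circ> Ai) \<circ> Ai ^^ n)) (ipow A Ai (int m' - int n))"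
        using aeq_trans[OF 1[unfolded id_comp] 2] .
      have k: "int m' - int n = int m - int (Suc n)" using Suc by simp
      show ?thesis unfolding e using 3 unfolding k .
    qed
  qed
qed

lemma ipow_add: assumes "ip A Ai" shows "aeq (ipow A Ai a \<circ> ipow A Ai b) (ipow A Ai (a + b))"
proof -
  have A: "aeq A A" "aeq Ai Ai" using assms by (auto simp: ip_def)
  consider "0 \<le> a" "0 \<le> b" | "a < 0" "b < 0" | "0 \<le> a" "b < 0" | "a < 0" "0 \<le> b" by linarith
  then show ?thesis
  proof cases
    case 1
    have "ipow A Ai a \<circ> ipow A Ai b = A ^^ (nat a + nat b)" using 1 by (simp add: ipow_def funpow_add)
    also have "... = ipow A Ai (a + b)" using 1 by (simp add: ipow_def nat_add_distrib)
    finally have e: "ipow A Ai a \<circ> ipow A Ai b = ipow A Ai (a + b)" .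
    show ?thesis unfolding e by (rule good_ipow[OF assms])
  next
    case 2
    have "ipow A Ai a \<circ> ipow A Ai b = Ai ^^ (nat (-a) + nat (-b))" using 2 by (simp add: ipow_def funpow_add)
    also have "... = ipow A Ai (a + b)"
    proof -
      have "nat (-a) + nat (-b) = nat (- (a + b))" using 2 by arith
      then show ?thesis using 2 by (simp add: ipow_def)
    qed
    finally have e: "ipow A Ai a \<circ> ipow A Ai b = ipow A Ai (a + b)" .
    show ?thesis unfolding e by (rule good_ipow[OF assms])
  next
    case 3
    have "ipow A Ai a \<circ> ipow A Ai b = A ^^ nat a \<circ> Ai ^^ nat (-b)" using 3 by (simp add: ipow_def)
    moreover have "int (nat a) - int (nat (-b)) = a + b" using 3 by simp
    ultimately show ?thesis using mix[OF assms, of "nat a" "nat (-b)"] by simp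
  next
    case 4
    have "ipow A Ai a \<circ> ipow A Ai b = Ai ^^ nat (-a) \<circ> A ^^ nat b" using 4 by (simp add: ipow_def)
    moreover have "ipow Ai A (int (nat (-a)) - int (nat b)) = ipow A Ai (a + b)"
    proof -
      have k: "int (nat (-a)) - int (nat b) = - (a + b)" using 4 by simp
      show ?thesis unfolding k by (rule ipow_neg)
    qed
    ultimately show ?thesis using mix[OF ip_sym[OF assms], of "nat (-a)" "nat b"] by simp
  qed
qed

lemma comm_ipow1: "ip A Ai \<Longrightarrow> aeq X X \<Longrightarrow> aeq (X \<circ> A) (A \<circ> X) \<Longrightarrow> aeq (X \<circ> ipow A Ai k) (ipow A Ai k \<circ> X)"
  by (rule conj_ipow)

lemma comm_ipow2:
  assumes "ip A Ai" "ip B Bi" "aeq (A \<circ> B) (B \<circ> A)"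
  shows "aeq (ipow A Ai a \<circ> ipow B Bi b) (ipow B Bi b \<circ> ipow A Ai a)"
proof -
  have A: "aeq A A" using assms(1) by (simp add: ip_def)
  have 1: "aeq (A \<circ> ipow B Bi b) (ipow B Bi b \<circ> A)" by (rule comm_ipow1[OF assms(2) A assms(3)])
  have 2: "aeq (ipow B Bi b \<circ> ipow A Ai a) (ipow A Ai a \<circ> ipow B Bi b)"
    by (rule comm_ipow1[OF assms(1) good_ipow[OF assms(2)] aeq_sym[OF 1]])
  show ?thesis by (rule aeq_sym[OF 2])
qed

lemma comm_inv:
  assumes "ip A Ai" "ip B Bi" "aeq (A \<circ> B) (B \<circ> A)"
  shows "aeq (Ai \<circ> Bi) (Bi \<circ> Ai)"
proof -
  have A: "aeq A A" "aeq Ai Ai" using assms(1) by (auto simp: ip_def)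
  have B: "aeq B B" "aeq Bi Bi" using assms(2) by (auto simp: ip_def)
  have 1: "aeq (A \<circ> Bi) (Bi \<circ> A)" by (rule conj_inv[OF assms(2) assms(2) A(1) assms(3)])
  have 2: "aeq (Bi \<circ> Ai) (Ai \<circ> Bi)" by (rule conj_inv[OF assms(1) assms(1) B(2) aeq_sym[OF 1]])
  show ?thesis by (rule aeq_sym[OF 2])
qed

lemma pow_prod:
  assumes A: "aeq A A" and B: "aeq B B" and h: "aeq (B \<circ> A) (A \<circ> B)"
  shows "aeq ((A \<circ> B) ^^ n) (A ^^ n \<circ> B ^^ n)"
proof (induction n)
  case 0 show ?case unfolding funpow.simps(1) comp_id by (rule aeq_id)
next
  case (Suc n)
  have c: "aeq (B \<circ> A ^^ n) (A ^^ n \<circ> B)" by (rule conj_nat[OF B A A h])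
  have 1: "aeq ((A \<circ> B) \<circ> (A \<circ> B) ^^ n) ((A \<circ> B) \<circ> (A ^^ n \<circ> B ^^ n))"
    by (rule aeq_comp[OF aeq_comp[OF A B] Suc.IH])
  have 2: "aeq (A \<circ> ((B \<circ> A ^^ n) \<circ> B ^^ n)) (A \<circ> ((A ^^ n \<circ> B) \<circ> B ^^ n))"
    by (rule aeq_comp[OF A aeq_comp[OF c good_funpow[OF B]]])
  have e1: "(A \<circ> B) ^^ Suc n = (A \<circ> B) \<circ> (A \<circ> B) ^^ n" by (rule funpow.simps(2))
  have e2: "(A \<circ> B) \<circ> (A ^^ n \<circ> B ^^ n) = A \<circ> ((B \<circ> A ^^ n) \<circ> B ^^ n)" by (simp only: comp_assoc)
  have e3: "A ^^ Suc n \<circ> B ^^ Suc n = A \<circ> ((A ^^ n \<circ> B) \<circ> B ^^ n)" by (simp only: funpow.simps(2) comp_assoc)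
  show ?case unfolding e1 e3 using aeq_trans[OF 1] 2 unfolding e2 by blast
qed

lemma prod_ipow:
  assumes "ip A Ai" "ip B Bi" "aeq (A \<circ> B) (B \<circ> A)"
  shows "aeq (ipow (A \<circ> B) (Bi \<circ> Ai) k) (ipow A Ai k \<circ> ipow B Bi k)"
proof -
  have A: "aeq A A" "aeq Ai Ai" using assms(1) by (auto simp: ip_def)
  have B: "aeq B B" "aeq Bi Bi" using assms(2) by (auto simp: ip_def)
  have ci: "aeq (Ai \<circ> Bi) (Bi \<circ> Ai)" by (rule comm_inv[OF assms])
  show ?thesis
  proof (cases "0 \<le> k")
    case True then show ?thesis using pow_prod[OF A(1) B(1) aeq_sym[OF assms(3)]] by (simp add: ipow_def)
  next
    case False
    define n where "n = nat (- k)"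
    have 1: "aeq ((Bi \<circ> Ai) ^^ n) (Bi ^^ n \<circ> Ai ^^ n)" by (rule pow_prod[OF B(2) A(2) ci])
    have 2: "aeq (ipow Bi B (int n) \<circ> ipow Ai A (int n)) (ipow Ai A (int n) \<circ> ipow Bi B (int n))"
      by (rule comm_ipow2[OF ip_sym[OF assms(2)] ip_sym[OF assms(1)] aeq_sym[OF ci]])
    have "aeq ((Bi \<circ> Ai) ^^ n) (Ai ^^ n \<circ> Bi ^^ n)" using aeq_trans[OF 1] 2 by (simp add: ipow_def)
    then show ?thesis using False by (simp add: ipow_def n_def)
  qed
qed


lemmas EV = ev.simps sg.simps s_def pi_a_def w0_def w1_def r_def T1_def T1inv_def T2_def T2inv_def
  T4_def T4inv_def comp_assoc comp_id id_comp

lemma wr_aeq: "wr u v \<Longrightarrow> ev u = A \<Longrightarrow> ev v = B \<Longrightarrow> aeq A B" by (simp add: wr_def)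

lemma evs: "ev [S0] = s 0" "ev [S1] = s 1" "ev [S2] = s 2" "ev [Pi] = pi_a" "ev [W0] = w0" "ev [W1] = w1" "ev [R] = r"
  "ev [Pi,S2,S1] = T1" "ev [S1,S2,Pi,Pi] = T1inv" "ev [S1,Pi,S2] = T2" "ev [S2,Pi,Pi,S1] = T2inv"
  "ev [R,W0] = T4" "ev [W0,R] = T4inv" "ev [] = id"
  by (simp only: EV)+

lemma gd: "aeq (s 0) (s 0)" "aeq (s 1) (s 1)" "aeq (s 2) (s 2)" "aeq pi_a pi_a" "aeq w0 w0" "aeq w1 w1" "aeq r r"
  "aeq T1 T1" "aeq T1inv T1inv" "aeq T2 T2" "aeq T2inv T2inv" "aeq T4 T4" "aeq T4inv T4inv"
  using good_ev[of "[S0]"] good_ev[of "[S1]"] good_ev[of "[S2]"] good_ev[of "[Pi]"] good_ev[of "[W0]"]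
    good_ev[of "[W1]"] good_ev[of "[R]"] good_ev[of "[Pi,S2,S1]"] good_ev[of "[S1,S2,Pi,Pi]"]
    good_ev[of "[S1,Pi,S2]"] good_ev[of "[S2,Pi,Pi,S1]"] good_ev[of "[R,W0]"] good_ev[of "[W0,R]"]
  unfolding evs by blast+

lemma ip1: "ip T1 T1inv"
proof -
  have "aeq (T1 \<circ> T1inv) id" by (rule wr_aeq[OF d_T1T1i]; simp only: EV)
  moreover have "aeq (T1inv \<circ> T1) id" by (rule wr_aeq[OF d_T1iT1]; simp only: EV)
  ultimately show ?thesis unfolding ip_def using gd by blast
qed
lemma ip2: "ip T2 T2inv"
proof -
  have "aeq (T2 \<circ> T2inv) id" by (rule wr_aeq[OF d_T2T2i]; simp only: EV)
  moreover have "aeq (T2inv \<circ> T2) id" by (rule wr_aeq[OF d_T2iT2]; simp only: EV)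
  ultimately show ?thesis unfolding ip_def using gd by blast
qed
lemma ip4: "ip T4 T4inv"
proof -
  have "aeq (T4 \<circ> T4inv) id" by (rule wr_aeq[OF d_T4T4i]; simp only: EV)
  moreover have "aeq (T4inv \<circ> T4) id" by (rule wr_aeq[OF d_T4iT4]; simp only: EV)
  ultimately show ?thesis unfolding ip_def using gd by blast
qed
lemma ipW: "ip (T1inv \<circ> T2inv) (T2 \<circ> T1)" by (rule ip_comp[OF ip_sym[OF ip1] ip_sym[OF ip2]])
lemma ip4i: "ip T4inv T4" by (rule ip_sym[OF ip4])

lemma comm12: "aeq (T1 \<circ> T2) (T2 \<circ> T1)" by (rule wr_aeq[OF d_T12]; simp only: EV)
lemma comm41: "aeq (T4 \<circ> T1) (T1 \<circ> T4)" by (rule wr_aeq[OF d_T41]; simp only: EV)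
lemma comm42: "aeq (T4 \<circ> T2) (T2 \<circ> T4)" by (rule wr_aeq[OF d_T42]; simp only: EV)

lemma cj:
  "aeq (s 0 \<circ> T1) ((T1inv \<circ> T2inv) \<circ> s 0)" "aeq (s 0 \<circ> T2) (T2 \<circ> s 0)" "aeq (s 0 \<circ> T4) (T4 \<circ> s 0)"
  "aeq (s 1 \<circ> T1) (T2 \<circ> s 1)" "aeq (s 1 \<circ> T2) (T1 \<circ> s 1)" "aeq (s 1 \<circ> T4) (T4 \<circ> s 1)"
  "aeq (s 2 \<circ> T1) (T1 \<circ> s 2)" "aeq (s 2 \<circ> T2) ((T1inv \<circ> T2inv) \<circ> s 2)" "aeq (s 2 \<circ> T4) (T4 \<circ> s 2)"
  "aeq (pi_a \<circ> T1) (T2 \<circ> pi_a)" "aeq (pi_a \<circ> T2) ((T1inv \<circ> T2inv) \<circ> pi_a)" "aeq (pi_a \<circ> T4) (T4 \<circ> pi_a)"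
  "aeq (w0 \<circ> T1) (T1 \<circ> w0)" "aeq (w0 \<circ> T2) (T2 \<circ> w0)" "aeq (w0 \<circ> T4) (T4inv \<circ> w0)"
  "aeq (r \<circ> T1) (T1 \<circ> r)" "aeq (r \<circ> T2) (T2 \<circ> r)" "aeq (r \<circ> T4) (T4inv \<circ> r)"
  apply (rule wr_aeq[OF c_s0_1]; simp only: EV)
  apply (rule wr_aeq[OF c_s0_2]; simp only: EV)
  apply (rule wr_aeq[OF c_s0_4]; simp only: EV)
  apply (rule wr_aeq[OF c_s1_1]; simp only: EV)
  apply (rule wr_aeq[OF c_s1_2]; simp only: EV)
  apply (rule wr_aeq[OF c_s1_4]; simp only: EV)
  apply (rule wr_aeq[OF c_s2_1]; simp only: EV)
  apply (rule wr_aeq[OF c_s2_2]; simp only: EV)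
  apply (rule wr_aeq[OF c_s2_4]; simp only: EV)
  apply (rule wr_aeq[OF c_pi_1]; simp only: EV)
  apply (rule wr_aeq[OF c_pi_2]; simp only: EV)
  apply (rule wr_aeq[OF c_pi_4]; simp only: EV)
  apply (rule wr_aeq[OF c_w0_1]; simp only: EV)
  apply (rule wr_aeq[OF c_w0_2]; simp only: EV)
  apply (rule wr_aeq[OF c_w0_4]; simp only: EV)
  apply (rule wr_aeq[OF c_r_1]; simp only: EV)
  apply (rule wr_aeq[OF c_r_2]; simp only: EV)
  apply (rule wr_aeq[OF c_r_4]; simp only: EV)
  done

lemma w1rel_aeq: "aeq w1 (r \<circ> w0 \<circ> r)" by (rule wr_aeq[OF wr_w1rel]; simp only: EV)

lemma core_t1: "core (\<lambda>p. tau p 1)"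
  unfolding core_def
proof (intro allI impI)
  fix p q assume "agc p q" then show "tau p 1 = tau q 1" by (rule agc_fun2(1))
qed
lemma gt1: "geq (\<lambda>p. tau p 1) (\<lambda>p. tau p 1)" by (rule geq_refl[OF core_t1])

lemma s_tau_other: "j mod 3 \<noteq> i mod 3 \<Longrightarrow> tau (sig_s i p) j = tau p j"
  by (simp add: tau_def sig_s_def)

lemma fix_s0: "s 0 (\<lambda>p. tau p 1) = (\<lambda>p. tau p 1)"
  by (rule ext) (simp add: s_def pull_def s_tau_other)
lemma fix_s2: "s 2 (\<lambda>p. tau p 1) = (\<lambda>p. tau p 1)"
  by (rule ext) (simp add: s_def pull_def s_tau_other)
lemma fix_w0: "w0 (\<lambda>p. tau p 1) = (\<lambda>p. tau p 1)"
  by (rule ext) (simp add: w0_def pull_def)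
lemma fix_pi: "pi_a (\<lambda>p. tau p 1) = ipow T2 T2inv 1 (\<lambda>p. tau p 1)"
  by (rule ext) (simp add: ipow_def T2_def pi_a_def s_def pull_def s_tau_other)
lemma fix_s1: "s 1 (\<lambda>p. tau p 1) = ipow T1 T1inv (-1) (ipow T2 T2inv 1 (\<lambda>p. tau p 1))"
  by (rule ext) (simp add: ipow_def T1inv_def T2_def pi_a_def s_def pull_def s_tau_other)
lemma fix_r: "r (\<lambda>p. tau p 1) = ipow T4 T4inv 1 (\<lambda>p. tau p 1)"
  by (rule ext) (simp add: ipow_def T4_def w0_def r_def pull_def)

lemma cA: assumes "aeq (X \<circ> A) (B \<circ> Y)" "geq f g" shows "geq (X (A f)) (B (Y g))"
  using app[OF assms] unfolding comp_apply .
lemma gA: assumes "aeq A A" "geq f g" shows "geq (A f) (A g)" using app[OF assms] .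

lemma gp: "aeq (ipow T1 T1inv k) (ipow T1 T1inv k)" "aeq (ipow T2 T2inv k) (ipow T2 T2inv k)"
  "aeq (ipow T4 T4inv k) (ipow T4 T4inv k)" "aeq (ipow (T1inv \<circ> T2inv) (T2 \<circ> T1) k) (ipow (T1inv \<circ> T2inv) (T2 \<circ> T1) k)"
  by (rule good_ipow[OF ip1], rule good_ipow[OF ip2], rule good_ipow[OF ip4], rule good_ipow[OF ipW])

lemma prodW: "aeq (ipow (T1inv \<circ> T2inv) (T2 \<circ> T1) k) (ipow T1 T1inv (-k) \<circ> ipow T2 T2inv (-k))"
proof -
  have c: "aeq (T1inv \<circ> T2inv) (T2inv \<circ> T1inv)" by (rule comm_inv[OF ip1 ip2 comm12])
  have e: "ipow T1 T1inv (-k) = ipow T1inv T1 k" "ipow T2 T2inv (-k) = ipow T2inv T2 k" by (rule ipow_neg)+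
  show ?thesis unfolding e by (rule prod_ipow[OF ip_sym[OF ip1] ip_sym[OF ip2] c])
qed

lemma addA: assumes "ip A Ai" "geq f g" "c = a + b" shows "geq (ipow A Ai a (ipow A Ai b f)) (ipow A Ai c g)"
  using app[OF ipow_add[OF assms(1)] assms(2)] unfolding comp_apply assms(3) .

lemma commA: assumes "ip A Ai" "ip B Bi" "aeq (A \<circ> B) (B \<circ> A)" "geq f g"
  shows "geq (ipow A Ai a (ipow B Bi b f)) (ipow B Bi b (ipow A Ai a g))"
  using cA[OF comm_ipow2[OF assms(1-3)] assms(4)] .

lemmas gtr = geq_trans


lemma comm21: "aeq (T2 \<circ> T1) (T1 \<circ> T2)" by (rule aeq_sym[OF comm12])

lemma claim_s0: "geq (s 0 (tauf n m N)) (tauf (-n) (m - n) N)"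
proof -
  define t where "t = (\<lambda>p::point. tau p 1)"
  define G where "G = ipow T4 T4inv N t"
  define F where "F = ipow T2 T2inv m G"
  have gt: "geq t t" unfolding t_def by (rule gt1)
  have gG: "geq G G" unfolding G_def by (rule gA[OF gp(3) gt])
  have gF: "geq F F" unfolding F_def by (rule gA[OF gp(2) gG])
  have e0: "tauf n m N = ipow T1 T1inv n F" by (simp add: tauf_def F_def G_def t_def)
  have e1: "tauf (-n) (m - n) N = ipow T1 T1inv (-n) (ipow T2 T2inv (m - n) G)" by (simp add: tauf_def G_def t_def)
  have c1: "geq (s 0 (ipow T1 T1inv n F)) (ipow (T1inv \<circ> T2inv) (T2 \<circ> T1) n (s 0 F))"
    by (rule cA[OF conj_ipow[OF ip1 ipW gd(1) cj(1)] gF])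
  have a: "geq (s 0 G) G"
  proof -
    have "geq (s 0 (ipow T4 T4inv N t)) (ipow T4 T4inv N (s 0 t))"
      by (rule cA[OF conj_ipow[OF ip4 ip4 gd(1) cj(3)] gt])
    then show ?thesis unfolding G_def t_def fix_s0 .
  qed
  have b: "geq (s 0 F) F"
  proof -
    have 1: "geq (s 0 (ipow T2 T2inv m G)) (ipow T2 T2inv m (s 0 G))"
      by (rule cA[OF conj_ipow[OF ip2 ip2 gd(1) cj(2)] gG])
    have 2: "geq (ipow T2 T2inv m (s 0 G)) (ipow T2 T2inv m G)" by (rule gA[OF gp(2) a])
    show ?thesis unfolding F_def by (rule gtr[OF 1 2])
  qed
  have c2: "geq (ipow (T1inv \<circ> T2inv) (T2 \<circ> T1) n (s 0 F)) (ipow T1 T1inv (-n) (ipow T2 T2inv (-n) F))"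
    using app[OF prodW b] unfolding comp_apply .
  have c3: "geq (ipow T1 T1inv (-n) (ipow T2 T2inv (-n) F)) (ipow T1 T1inv (-n) (ipow T2 T2inv (m - n) G))"
    unfolding F_def by (rule gA[OF gp(1) addA[OF ip2 gG]]) simp
  show ?thesis unfolding e0 e1 by (rule gtr[OF gtr[OF c1 c2] c3])
qed

lemma claim_s1: "geq (s 1 (tauf n m N)) (tauf (m - 1) (n + 1) N)"
proof -
  define t where "t = (\<lambda>p::point. tau p 1)"
  define G where "G = ipow T4 T4inv N t"
  define F where "F = ipow T2 T2inv m G"
  have gt: "geq t t" unfolding t_def by (rule gt1)
  have gG: "geq G G" unfolding G_def by (rule gA[OF gp(3) gt])
  have gF: "geq F F" unfolding F_def by (rule gA[OF gp(2) gG])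
  have g2t: "geq (ipow T2 T2inv 1 t) (ipow T2 T2inv 1 t)" by (rule gA[OF gp(2) gt])
  have g2G: "geq (ipow T2 T2inv 1 G) (ipow T2 T2inv 1 G)" by (rule gA[OF gp(2) gG])
  have e0: "tauf n m N = ipow T1 T1inv n F" by (simp add: tauf_def F_def G_def t_def)
  have e1: "tauf (m - 1) (n + 1) N = ipow T1 T1inv (m - 1) (ipow T2 T2inv (n + 1) G)" by (simp add: tauf_def G_def t_def)
  have c1: "geq (s 1 (ipow T1 T1inv n F)) (ipow T2 T2inv n (s 1 F))"
    by (rule cA[OF conj_ipow[OF ip1 ip2 gd(2) cj(4)] gF])
  have sG: "geq (s 1 G) (ipow T1 T1inv (-1) (ipow T2 T2inv 1 G))"
  proof -
    have 1: "geq (s 1 (ipow T4 T4inv N t)) (ipow T4 T4inv N (s 1 t))"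
      by (rule cA[OF conj_ipow[OF ip4 ip4 gd(2) cj(6)] gt])
    have 2: "geq (ipow T4 T4inv N (ipow T1 T1inv (-1) (ipow T2 T2inv 1 t))) (ipow T1 T1inv (-1) (ipow T4 T4inv N (ipow T2 T2inv 1 t)))"
      by (rule commA[OF ip4 ip1 comm41 g2t])
    have 3: "geq (ipow T1 T1inv (-1) (ipow T4 T4inv N (ipow T2 T2inv 1 t))) (ipow T1 T1inv (-1) (ipow T2 T2inv 1 (ipow T4 T4inv N t)))"
      by (rule gA[OF gp(1) commA[OF ip4 ip2 comm42 gt]])
    have st: "s 1 t = ipow T1 T1inv (-1) (ipow T2 T2inv 1 t)" unfolding t_def by (rule fix_s1)
    show ?thesis unfolding G_def using gtr[OF gtr[OF 1[unfolded st] 2] 3] .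
  qed
  have sF: "geq (s 1 F) (ipow T1 T1inv (m - 1) (ipow T2 T2inv 1 G))"
  proof -
    have 1: "geq (s 1 (ipow T2 T2inv m G)) (ipow T1 T1inv m (s 1 G))"
      by (rule cA[OF conj_ipow[OF ip2 ip1 gd(2) cj(5)] gG])
    have 2: "geq (ipow T1 T1inv m (s 1 G)) (ipow T1 T1inv m (ipow T1 T1inv (-1) (ipow T2 T2inv 1 G)))"
      by (rule gA[OF gp(1) sG])
    have 3: "geq (ipow T1 T1inv m (ipow T1 T1inv (-1) (ipow T2 T2inv 1 G))) (ipow T1 T1inv (m - 1) (ipow T2 T2inv 1 G))"
      by (rule addA[OF ip1 g2G]) simp
    show ?thesis unfolding F_def by (rule gtr[OF gtr[OF 1 2] 3])
  qed
  have c2: "geq (ipow T2 T2inv n (s 1 F)) (ipow T2 T2inv n (ipow T1 T1inv (m - 1) (ipow T2 T2inv 1 G)))"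
    by (rule gA[OF gp(2) sF])
  have c3: "geq (ipow T2 T2inv n (ipow T1 T1inv (m - 1) (ipow T2 T2inv 1 G))) (ipow T1 T1inv (m - 1) (ipow T2 T2inv n (ipow T2 T2inv 1 G)))"
    by (rule commA[OF ip2 ip1 comm21 g2G])
  have c4: "geq (ipow T1 T1inv (m - 1) (ipow T2 T2inv n (ipow T2 T2inv 1 G))) (ipow T1 T1inv (m - 1) (ipow T2 T2inv (n + 1) G))"
    by (rule gA[OF gp(1) addA[OF ip2 gG]]) simp
  show ?thesis unfolding e0 e1 by (rule gtr[OF gtr[OF gtr[OF c1 c2] c3] c4])
qed

lemma claim_s2: "geq (s 2 (tauf n m N)) (tauf (n - m) (-m) N)"
proof -
  define t where "t = (\<lambda>p::point. tau p 1)"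
  define G where "G = ipow T4 T4inv N t"
  define F where "F = ipow T2 T2inv m G"
  have gt: "geq t t" unfolding t_def by (rule gt1)
  have gG: "geq G G" unfolding G_def by (rule gA[OF gp(3) gt])
  have gF: "geq F F" unfolding F_def by (rule gA[OF gp(2) gG])
  have g2G: "geq (ipow T2 T2inv (-m) G) (ipow T2 T2inv (-m) G)" by (rule gA[OF gp(2) gG])
  have e0: "tauf n m N = ipow T1 T1inv n F" by (simp add: tauf_def F_def G_def t_def)
  have e1: "tauf (n - m) (-m) N = ipow T1 T1inv (n - m) (ipow T2 T2inv (-m) G)" by (simp add: tauf_def G_def t_def)
  have c1: "geq (s 2 (ipow T1 T1inv n F)) (ipow T1 T1inv n (s 2 F))"
    by (rule cA[OF conj_ipow[OF ip1 ip1 gd(3) cj(7)] gF])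
  have a: "geq (s 2 G) G"
  proof -
    have "geq (s 2 (ipow T4 T4inv N t)) (ipow T4 T4inv N (s 2 t))"
      by (rule cA[OF conj_ipow[OF ip4 ip4 gd(3) cj(9)] gt])
    then show ?thesis unfolding G_def t_def fix_s2 .
  qed
  have b: "geq (s 2 F) (ipow T1 T1inv (-m) (ipow T2 T2inv (-m) G))"
  proof -
    have 1: "geq (s 2 (ipow T2 T2inv m G)) (ipow (T1inv \<circ> T2inv) (T2 \<circ> T1) m (s 2 G))"
      by (rule cA[OF conj_ipow[OF ip2 ipW gd(3) cj(8)] gG])
    have 2: "geq (ipow (T1inv \<circ> T2inv) (T2 \<circ> T1) m (s 2 G)) (ipow T1 T1inv (-m) (ipow T2 T2inv (-m) G))"
      using app[OF prodW a] unfolding comp_apply .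
    show ?thesis unfolding F_def by (rule gtr[OF 1 2])
  qed
  have c2: "geq (ipow T1 T1inv n (s 2 F)) (ipow T1 T1inv n (ipow T1 T1inv (-m) (ipow T2 T2inv (-m) G)))"
    by (rule gA[OF gp(1) b])
  have c3: "geq (ipow T1 T1inv n (ipow T1 T1inv (-m) (ipow T2 T2inv (-m) G))) (ipow T1 T1inv (n - m) (ipow T2 T2inv (-m) G))"
    by (rule addA[OF ip1 g2G]) simp
  show ?thesis unfolding e0 e1 by (rule gtr[OF gtr[OF c1 c2] c3])
qed

lemma claim_pi: "geq (pi_a (tauf n m N)) (tauf (-m) (n - m + 1) N)"
proof -
  define t where "t = (\<lambda>p::point. tau p 1)"
  define G where "G = ipow T4 T4inv N t"
  define F where "F = ipow T2 T2inv m G"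
  have gt: "geq t t" unfolding t_def by (rule gt1)
  have gG: "geq G G" unfolding G_def by (rule gA[OF gp(3) gt])
  have gF: "geq F F" unfolding F_def by (rule gA[OF gp(2) gG])
  have g2G: "geq (ipow T2 T2inv 1 G) (ipow T2 T2inv 1 G)" by (rule gA[OF gp(2) gG])
  have g2G': "geq (ipow T2 T2inv (1 - m) G) (ipow T2 T2inv (1 - m) G)" by (rule gA[OF gp(2) gG])
  have e0: "tauf n m N = ipow T1 T1inv n F" by (simp add: tauf_def F_def G_def t_def)
  have e1: "tauf (-m) (n - m + 1) N = ipow T1 T1inv (-m) (ipow T2 T2inv (n - m + 1) G)" by (simp add: tauf_def G_def t_def)
  have c1: "geq (pi_a (ipow T1 T1inv n F)) (ipow T2 T2inv n (pi_a F))"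
    by (rule cA[OF conj_ipow[OF ip1 ip2 gd(4) cj(10)] gF])
  have a: "geq (pi_a G) (ipow T2 T2inv 1 G)"
  proof -
    have 1: "geq (pi_a (ipow T4 T4inv N t)) (ipow T4 T4inv N (pi_a t))"
      by (rule cA[OF conj_ipow[OF ip4 ip4 gd(4) cj(12)] gt])
    have 2: "geq (ipow T4 T4inv N (ipow T2 T2inv 1 t)) (ipow T2 T2inv 1 (ipow T4 T4inv N t))"
      by (rule commA[OF ip4 ip2 comm42 gt])
    have pt: "pi_a t = ipow T2 T2inv 1 t" unfolding t_def by (rule fix_pi)
    show ?thesis unfolding G_def using gtr[OF 1[unfolded pt] 2] .
  qed
  have b: "geq (pi_a F) (ipow T1 T1inv (-m) (ipow T2 T2inv (1 - m) G))"
  proof -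
    have 1: "geq (pi_a (ipow T2 T2inv m G)) (ipow (T1inv \<circ> T2inv) (T2 \<circ> T1) m (pi_a G))"
      by (rule cA[OF conj_ipow[OF ip2 ipW gd(4) cj(11)] gG])
    have 2: "geq (ipow (T1inv \<circ> T2inv) (T2 \<circ> T1) m (pi_a G)) (ipow T1 T1inv (-m) (ipow T2 T2inv (-m) (ipow T2 T2inv 1 G)))"
      using app[OF prodW a] unfolding comp_apply .
    have 3: "geq (ipow T1 T1inv (-m) (ipow T2 T2inv (-m) (ipow T2 T2inv 1 G))) (ipow T1 T1inv (-m) (ipow T2 T2inv (1 - m) G))"
      by (rule gA[OF gp(1) addA[OF ip2 gG]]) simp
    show ?thesis unfolding F_def by (rule gtr[OF gtr[OF 1 2] 3])
  qed
  have c2: "geq (ipow T2 T2inv n (pi_a F)) (ipow T2 T2inv n (ipow T1 T1inv (-m) (ipow T2 T2inv (1 - m) G)))"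
    by (rule gA[OF gp(2) b])
  have c3: "geq (ipow T2 T2inv n (ipow T1 T1inv (-m) (ipow T2 T2inv (1 - m) G))) (ipow T1 T1inv (-m) (ipow T2 T2inv n (ipow T2 T2inv (1 - m) G)))"
    by (rule commA[OF ip2 ip1 comm21 g2G'])
  have c4: "geq (ipow T1 T1inv (-m) (ipow T2 T2inv n (ipow T2 T2inv (1 - m) G))) (ipow T1 T1inv (-m) (ipow T2 T2inv (n - m + 1) G))"
    by (rule gA[OF gp(1) addA[OF ip2 gG]]) simp
  show ?thesis unfolding e0 e1 by (rule gtr[OF gtr[OF gtr[OF c1 c2] c3] c4])
qed

lemma claim_w0: "geq (w0 (tauf n m N)) (tauf n m (-N))"
proof -
  define t where "t = (\<lambda>p::point. tau p 1)"
  define G where "G = ipow T4 T4inv N t"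
  define F where "F = ipow T2 T2inv m G"
  have gt: "geq t t" unfolding t_def by (rule gt1)
  have gG: "geq G G" unfolding G_def by (rule gA[OF gp(3) gt])
  have gF: "geq F F" unfolding F_def by (rule gA[OF gp(2) gG])
  have e0: "tauf n m N = ipow T1 T1inv n F" by (simp add: tauf_def F_def G_def t_def)
  have e1: "tauf n m (-N) = ipow T1 T1inv n (ipow T2 T2inv m (ipow T4 T4inv (-N) t))" by (simp add: tauf_def t_def)
  have c1: "geq (w0 (ipow T1 T1inv n F)) (ipow T1 T1inv n (w0 F))"
    by (rule cA[OF conj_ipow[OF ip1 ip1 gd(5) cj(13)] gF])
  have a: "geq (w0 G) (ipow T4 T4inv (-N) t)"
  proof -
    have "geq (w0 (ipow T4 T4inv N t)) (ipow T4inv T4 N (w0 t))"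
      by (rule cA[OF conj_ipow[OF ip4 ip4i gd(5) cj(15)] gt])
    then show ?thesis unfolding G_def t_def fix_w0 ipow_neg .
  qed
  have b: "geq (w0 F) (ipow T2 T2inv m (ipow T4 T4inv (-N) t))"
  proof -
    have 1: "geq (w0 (ipow T2 T2inv m G)) (ipow T2 T2inv m (w0 G))"
      by (rule cA[OF conj_ipow[OF ip2 ip2 gd(5) cj(14)] gG])
    show ?thesis unfolding F_def by (rule gtr[OF 1 gA[OF gp(2) a]])
  qed
  show ?thesis unfolding e0 e1 by (rule gtr[OF c1 gA[OF gp(1) b]])
qed

lemma claim_r: "geq (r (tauf n m N)) (tauf n m (1 - N))"
proof -
  define t where "t = (\<lambda>p::point. tau p 1)"
  define G where "G = ipow T4 T4inv N t"
  define F where "F = ipow T2 T2inv m G"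
  have gt: "geq t t" unfolding t_def by (rule gt1)
  have gG: "geq G G" unfolding G_def by (rule gA[OF gp(3) gt])
  have gF: "geq F F" unfolding F_def by (rule gA[OF gp(2) gG])
  have e0: "tauf n m N = ipow T1 T1inv n F" by (simp add: tauf_def F_def G_def t_def)
  have e1: "tauf n m (1 - N) = ipow T1 T1inv n (ipow T2 T2inv m (ipow T4 T4inv (1 - N) t))" by (simp add: tauf_def t_def)
  have c1: "geq (r (ipow T1 T1inv n F)) (ipow T1 T1inv n (r F))"
    by (rule cA[OF conj_ipow[OF ip1 ip1 gd(7) cj(16)] gF])
  have a: "geq (r G) (ipow T4 T4inv (1 - N) t)"
  proof -
    have 1: "geq (r (ipow T4 T4inv N t)) (ipow T4inv T4 N (r t))"
      by (rule cA[OF conj_ipow[OF ip4 ip4i gd(7) cj(18)] gt])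
    have rt: "r t = ipow T4 T4inv 1 t" unfolding t_def by (rule fix_r)
    have 2: "geq (ipow T4 T4inv (-N) (ipow T4 T4inv 1 t)) (ipow T4 T4inv (1 - N) t)"
      by (rule addA[OF ip4 gt]) simp
    show ?thesis using gtr[OF 1[unfolded rt ipow_neg[of T4 T4inv N, symmetric]] 2] unfolding G_def .
  qed
  have b: "geq (r F) (ipow T2 T2inv m (ipow T4 T4inv (1 - N) t))"
  proof -
    have 1: "geq (r (ipow T2 T2inv m G)) (ipow T2 T2inv m (r G))"
      by (rule cA[OF conj_ipow[OF ip2 ip2 gd(7) cj(17)] gG])
    show ?thesis unfolding F_def by (rule gtr[OF 1 gA[OF gp(2) a]])
  qed
  show ?thesis unfolding e0 e1 by (rule gtr[OF c1 gA[OF gp(1) b]])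
qed

lemma gtauf: "geq (tauf n m N) (tauf n m N)"
  unfolding tauf_def by (rule gA[OF gp(1) gA[OF gp(2) gA[OF gp(3) gt1]]])

lemma claim_w1: "geq (w1 (tauf n m N)) (tauf n m (2 - N))"
proof -
  have 1: "geq (w1 (tauf n m N)) (r (w0 (r (tauf n m N))))"
    using app[OF w1rel_aeq gtauf] unfolding comp_apply .
  have 2: "geq (r (w0 (r (tauf n m N)))) (r (w0 (tauf n m (1 - N))))"
    by (rule gA[OF gd(7) gA[OF gd(5) claim_r]])
  have 3: "geq (r (w0 (tauf n m (1 - N)))) (r (tauf n m (- (1 - N))))"
    by (rule gA[OF gd(7) claim_w0])
  have 4: "geq (r (tauf n m (- (1 - N)))) (tauf n m (1 - (- (1 - N))))" by (rule claim_r)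
  have e: "1 - (- (1 - N)) = 2 - N" by simp
  show ?thesis using gtr[OF gtr[OF gtr[OF 1 2] 3] 4] unfolding e .
qed

theorem proposition3p3:
  fixes n m N :: int
  shows "keq (s 0 (tauf n m N)) (tauf (-n) (m - n) N)
       \<and> keq (s 1 (tauf n m N)) (tauf (m - 1) (n + 1) N)
       \<and> keq (s 2 (tauf n m N)) (tauf (n - m) (-m) N)
       \<and> keq (pi_a (tauf n m N)) (tauf (-m) (n - m + 1) N)
       \<and> keq (w0 (tauf n m N)) (tauf n m (-N))
       \<and> keq (w1 (tauf n m N)) (tauf n m (2 - N))
       \<and> keq (r (tauf n m N)) (tauf n m (1 - N))"
  by (intro conjI geq_keq claim_s0 claim_s1 claim_s2 claim_pi claim_w0 claim_w1 claim_r)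


end
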